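(* Let $n\ge2$ and $m\ge2$. There is a constant $C=C(m,n)$ such that for all Schwartz functions $f_1,\dots,f_m$ on $\mathbb R^n$, every $k\in\{1,\dots,m\}$ and every $x\in\mathbb R^n$, $$\mathcal M(f_1,\dots,f_m)(x)\le C\Big(\prod_{j\ne k}Mf_j(x)\Big)\,Sf_k(x).$$
   Context: For functions $f_1,\dots,f_m$ on $\mathbb R^n$ the $m$-linear spherical maximal function is $$\mathcal M(f_1,\dots,f_m)(x)=\sup_{t>0}\Big|\int_{\mathbb S^{mn-1}}\prod_{j=1}^m f_j(x-ty^j)\,d\sigma_{mn-1}(y^1,\dots,y^m)\Big|,$$ where $(y^1,\dots,y^m)\in\mathbb R^{mn}$ with $y^j\in\mathbb R^n$, and $d\sigma_{mn-1}$ is the surface measure on the unit sphere $\mathbb S^{mn-1}\subset\mathbb R^{mn}$. $Mf$ is the (centered) Hardy–Littlewood maximal function of $f$ on $\mathbb R^n$, and $Sf(x)=\sup_{t>0}\big|\int_{\mathbb S^{n-1}}f(x-ty)\,d\sigma_{n-1}(y)\big|$ is the linear spherical maximal function on $\mathbb R^n$. *)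

theory Defs
  imports "HOL-Analysis.Analysis"
begin

definition partial_dir :: "'a::euclidean_space \<Rightarrow> ('a \<Rightarrow> complex) \<Rightarrow> ('a \<Rightarrow> complex)" where
  "partial_dir v f = (\<lambda>x. frechet_derivative f (at x) v)"

fun iter_partial :: "'a::euclidean_space list \<Rightarrow> ('a \<Rightarrow> complex) \<Rightarrow> ('a \<Rightarrow> complex)" where
  "iter_partial [] f = f"
| "iter_partial (v # vs) f = partial_dir v (iter_partial vs f)"

definition schwartz :: "('a::euclidean_space \<Rightarrow> complex) \<Rightarrow> bool" where
  "schwartz f \<longleftrightarrow>
     (\<forall>vs. set vs \<subseteq> Basis \<longrightarrow> (\<forall>x. iter_partial vs f differentiable (at x))) \<and>
     (\<forall>vs (N::nat). set vs \<subseteq> Basis \<longrightarrow>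
        bounded (range (\<lambda>x. ((1 + norm x) ^ N) *\<^sub>R iter_partial vs f x)))"

text \<open>Surface measure on the unit sphere of a d-dimensional Euclidean space, defined via the
  cone construction: sigma(A) = d * Lebesgue measure of {r y : 0 < r <= 1, y in A}.  It is concentrated on sphere 0 1.\<close>
definition sphere_measure :: "'a::euclidean_space measure" where
  "sphere_measure =
     distr (density lborel (\<lambda>x. indicator (ball 0 1 - {0}) x * of_nat DIM('a))) borel
           (\<lambda>x. x /\<^sub>R norm x)"

definition HL_max :: "('a::euclidean_space \<Rightarrow> complex) \<Rightarrow> 'a \<Rightarrow> ennreal" where
  "HL_max f x = (SUP r\<in>{0<..}. (\<integral>\<^sup>+ y\<in>ball x r. ennreal (norm (f y)) \<partial>lborel) / emeasure lborel (ball x r))"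

definition sph_max :: "('a::euclidean_space \<Rightarrow> complex) \<Rightarrow> 'a \<Rightarrow> ennreal" where
  "sph_max f x = (SUP t\<in>{0<..}. ennreal (norm (LINT y|sphere_measure. f (x - t *\<^sub>R y))))"

text \<open>m-linear spherical maximal function; the index type 'm has m elements and
  real^'n^'m is R^{mn} with the Euclidean norm, y $ j being the block y^j.\<close>
definition multi_sph_max ::
    "('m::finite \<Rightarrow> real^'n \<Rightarrow> complex) \<Rightarrow> real^'n \<Rightarrow> ennreal" where
  "multi_sph_max f x = (SUP t\<in>{0<..}. ennreal (norm
      (LINT y|(sphere_measure :: (real^'n^'m) measure). (\<Prod>j\<in>UNIV. f j (x - t *\<^sub>R (y $ j))))))"

end

theory Submission
  imports Defs
begin

lemma measure_eqI_lessThan':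
  fixes M N :: "real measure"
  assumes sets: "sets M = sets borel" "sets N = sets borel"
  assumes fin: "\<And>x. emeasure M {..< x} < \<infinity>"
  assumes "\<And>x. emeasure M {..< x} = emeasure N {..< x}"
  shows "M = N"
proof (rule measure_eqI_generator_eq_countable)
  let ?LT = "\<lambda>a::real. {..< a}" let ?E = "range ?LT"
  show "Int_stable ?E"
    unfolding Int_stable_def
  proof safe
    fix a b :: real show "{..<a} \<inter> {..<b} \<in> ?E" by (rule image_eqI[where x="min a b"]) auto
  qed
  show "?E \<subseteq> Pow UNIV" "sets M = sigma_sets UNIV ?E" "sets N = sigma_sets UNIV ?E"
    unfolding sets borel_Iio by auto
  show "?LT`Rats \<subseteq> ?E" "(\<Union>i\<in>Rats. ?LT i) = UNIV" "\<And>a. a \<in> ?LT`Rats \<Longrightarrow> emeasure M a \<noteq> \<infinity>"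
    using fin by (auto simp: less_top) (metis Rats_no_top_le less_add_one order_less_le_trans)
qed (auto intro: assms countable_rat)

definition rad_measure :: "nat \<Rightarrow> real measure" where
  "rad_measure d = density lborel (\<lambda>s. ennreal (indicator {0<..} s * s^(d-1)))"

lemma nn_integral_power_lessThan:
  assumes "0 < d"
  shows "emeasure (rad_measure d) {..<b} = ennreal (max 0 b ^ d / d)"
proof (cases "b \<le> 0")
  case True
  have "emeasure (rad_measure d) {..<b} = (\<integral>\<^sup>+s. ennreal (indicator {0<..} s * s^(d-1)) * indicator {..<b} s \<partial>lborel)"
    unfolding rad_measure_def by (rule emeasure_density) auto
  also have "\<dots> = (\<integral>\<^sup>+(s::real). 0 \<partial>lborel)"
    using True by (intro nn_integral_cong) (auto split: split_indicator)
  finally show ?thesis using True assms by simp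
next
  case False
  have "emeasure (rad_measure d) {..<b} = (\<integral>\<^sup>+s. ennreal (s^(d-1)) * indicator {0..b} s \<partial>lborel)"
    unfolding rad_measure_def
    apply (subst emeasure_density)
      apply simp apply simp
    apply (rule nn_integral_cong_AE)
    using AE_lborel_singleton[of 0] AE_lborel_singleton[of b]
    by eventually_elim (auto split: split_indicator)
  also have "\<dots> = ennreal (b^d / d - 0^d/d)"
  proof (rule nn_integral_FTC_Icc[where F="\<lambda>s. s^d/ real d"])
    fix x :: real
    show "((\<lambda>s. s^d/ real d) has_real_derivative x^(d-1)) (at x)"
      using assms by (auto intro!: derivative_eq_intros simp: field_simps)
  qed (use False in auto)
  finally show ?thesis using False assms by (simp add: power_0_left)
qed

lemma sets_rad_measure[simp, measurable_cong]: "sets (rad_measure d) = sets borel"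
  by (simp add: rad_measure_def)

lemma sigma_finite_rad: assumes "0 < d" shows "sigma_finite_measure (rad_measure d)"
proof
  show "\<exists>A. countable A \<and> A \<subseteq> sets (rad_measure d) \<and> \<Union> A = space (rad_measure d) \<and> (\<forall>a\<in>A. emeasure (rad_measure d) a \<noteq> \<infinity>)"
  proof (intro exI[of _ "range (\<lambda>n::nat. {..<real n})"] conjI)
    show "\<Union> (range (\<lambda>n::nat. {..<real n})) = space (rad_measure d)"
      by (auto simp: rad_measure_def) (meson reals_Archimedean2)
    show "\<forall>a\<in>range (\<lambda>n::nat. {..<real n}). emeasure (rad_measure d) a \<noteq> \<infinity>"
      using nn_integral_power_lessThan[OF assms] by auto
  qed auto
qed

lemma punctured_ball_borel[measurable]: "ball 0 r - {0::'a::euclidean_space} \<in> sets borel"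
  using borel_open[OF open_ball[of 0 r]] borel_closed[OF closed_singleton[of 0]] by (rule sets.Diff)

lemma compl_zero_borel[measurable]: "- {0::'a::euclidean_space} \<in> sets borel"
  by (rule borel_open) (simp add: closed_singleton open_Compl)

lemma sgn_borel_measurable[measurable]: "(\<lambda>x::'a::euclidean_space. x /\<^sub>R norm x) \<in> borel_measurable borel"
  by (intro borel_measurable_scaleR borel_measurable_inverse borel_measurable_norm) auto

locale scaling_measure =
  fixes \<mu> :: "'a::euclidean_space measure" and d :: nat
  assumes sets_eq[measurable_cong]: "sets \<mu> = sets borel"
  and d_pos: "0 < d"
  and scale: "\<And>c A. 0 < c \<Longrightarrow> A \<in> sets borel \<Longrightarrow>
      emeasure \<mu> ((\<lambda>x. c *\<^sub>R x) -` A) = ennreal ((1/c)^d) * emeasure \<mu> A"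
  and ball_fin: "emeasure \<mu> (ball 0 1) < \<infinity>"
begin

definition sph :: "'a measure" where
  "sph = distr (density \<mu> (\<lambda>x. indicator (ball 0 1 - {0}) x * of_nat d)) borel (\<lambda>x. x /\<^sub>R norm x)"

lemma meas_mu_iff: "measurable \<mu> N = measurable borel N"
  by (rule measurable_cong_sets[OF sets_eq refl])

lemma space_eq[simp]: "space \<mu> = UNIV"
  using sets_eq_imp_space_eq[OF sets_eq] by simp

lemma sets_sph[simp, measurable_cong]: "sets sph = sets borel"
  by (simp add: sph_def)

lemma space_sph[simp]: "space sph = UNIV"
  by (simp add: sph_def)

lemma zero_null: "emeasure \<mu> {0} = 0"
proof -
  have "(\<lambda>x. 2 *\<^sub>R x) -` {0::'a} = {0}" by auto
  then have eq: "emeasure \<mu> {0} = ennreal ((1/2)^d) * emeasure \<mu> {0}"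
    using scale[of 2 "{0}"] by simp
  have "emeasure \<mu> {0} \<le> emeasure \<mu> (ball 0 1)"
    by (rule emeasure_mono) (auto simp: sets_eq)
  then have "emeasure \<mu> {0} < \<infinity>" using ball_fin by auto
  then obtain r where r: "emeasure \<mu> {0} = ennreal r" "0 \<le> r"
    by (cases "emeasure \<mu> {0}") auto
  have "ennreal r = ennreal ((1/2)^d * r)"
    using eq r by (simp add: ennreal_mult)
  then have "r = (1/2)^d * r" using r by (subst (asm) ennreal_inj) auto
  moreover have "(1/2::real)^d < 1" using d_pos by (simp add: power_less_one_iff)
  ultimately have "r = 0" using r(2)
  proof -
    assume a: "r = (1/2)^d * r" "(1/2::real)^d < 1" "0 \<le> r"
    show "r = 0"
    proof (rule ccontr)
      assume "r \<noteq> 0" with a have "0 < r" by auto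
      then have "(1/2)^d * r < 1 * r" using a(2) by (intro mult_strict_right_mono) auto
      then show False using a(1) by linarith
    qed
  qed
  then show ?thesis using r by simp
qed

definition cone :: "real \<Rightarrow> 'a set \<Rightarrow> 'a set" where
  "cone r B = {x. x \<noteq> 0 \<and> norm x < r \<and> x /\<^sub>R norm x \<in> B}"

lemma cone_sets[measurable]: assumes "B \<in> sets borel" shows "cone r B \<in> sets borel"
proof -
  have "cone r B = (ball 0 r - {0}) \<inter> (\<lambda>x. x /\<^sub>R norm x) -` B"
    by (auto simp: cone_def)
  also have "\<dots> \<in> sets borel" using assms
    by (intro sets.Int punctured_ball_borel measurable_sets_borel[OF sgn_borel_measurable])
  finally show ?thesis .
qed

lemma cone_scale:
  assumes B: "B \<in> sets borel" and r: "0 < r"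
  shows "emeasure \<mu> (cone r B) = ennreal (r^d) * emeasure \<mu> (cone 1 B)"
proof -
  have "(\<lambda>x. (1/r) *\<^sub>R x) -` cone 1 B = cone r B"
    using r by (auto simp: cone_def divide_simps)
  then show ?thesis
    using scale[of "1/r" "cone 1 B"] r B by simp
qed

lemma cone_fin: assumes "B \<in> sets borel" "0 < r" shows "emeasure \<mu> (cone r B) < \<infinity>"
proof -
  have "emeasure \<mu> (cone 1 B) \<le> emeasure \<mu> (ball 0 1)"
    by (rule emeasure_mono) (auto simp: sets_eq cone_def)
  then have "emeasure \<mu> (cone 1 B) < \<infinity>" using ball_fin by (rule le_less_trans)
  then show ?thesis using cone_scale[OF assms]
    by (simp add: ennreal_mult_less_top)
qed

lemma emeasure_sph: assumes "B \<in> sets borel"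
  shows "emeasure sph B = of_nat d * emeasure \<mu> (cone 1 B)"
proof -
  have "emeasure sph B = (\<integral>\<^sup>+x. indicator (ball 0 1 - {0}) x * of_nat d * indicator ((\<lambda>x. x /\<^sub>R norm x) -` B) x \<partial>\<mu>)"
    unfolding sph_def using assms
    by (subst emeasure_distr) (auto intro!: emeasure_density simp: sets_eq meas_mu_iff
       intro: measurable_sets_borel[OF sgn_borel_measurable])
  also have "\<dots> = (\<integral>\<^sup>+x. of_nat d * indicator (cone 1 B) x \<partial>\<mu>)"
    by (intro nn_integral_cong) (auto simp: cone_def split: split_indicator)
  also have "\<dots> = of_nat d * emeasure \<mu> (cone 1 B)"
    using assms by (subst nn_integral_cmult_indicator) (auto simp: sets_eq)
  finally show ?thesis .
qed

lemma finite_sph: "finite_measure sph"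
proof
  have "emeasure sph (space sph) = of_nat d * emeasure \<mu> (cone 1 UNIV)"
    by (simp add: emeasure_sph)
  then show "emeasure sph (space sph) \<noteq> \<infinity>"
    using cone_fin[of UNIV 1] by (auto simp: ennreal_mult_eq_top_iff)
qed

definition polmap :: "'a \<Rightarrow> real \<times> 'a" where
  "polmap x = (norm x, x /\<^sub>R norm x)"

lemma polmap_meas[measurable]: "polmap \<in> borel \<rightarrow>\<^sub>M borel \<Otimes>\<^sub>M borel"
  unfolding polmap_def by measurable

lemma polmap_pre: "A \<in> sets borel \<Longrightarrow> B \<in> sets borel \<Longrightarrow> polmap -` (A \<times> B) \<in> sets borel"
  using measurable_sets[OF polmap_meas, of "A \<times> B"] by auto

definition polD :: "'a measure" where "polD = density \<mu> (indicator (-{0}))"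

lemma sets_polD[simp, measurable_cong]: "sets polD = sets borel" by (simp add: polD_def sets_eq)
lemma space_polD[simp]: "space polD = UNIV" by (simp add: polD_def)

lemma emeasure_pair_rect:
  assumes A: "A \<in> sets borel" and B: "B \<in> sets borel"
  shows "emeasure (rad_measure d) A * emeasure sph B =
     emeasure (distr polD (borel \<Otimes>\<^sub>M borel) polmap) (A \<times> B)"
proof -
  define N1 where "N1 = distr (density \<mu> (\<lambda>x. indicator {x. x \<noteq> 0 \<and> x /\<^sub>R norm x \<in> B} x)) borel norm"
  define N2 where "N2 = density (rad_measure d) (\<lambda>_. emeasure sph B)"
  have PB[measurable]: "{x::'a. x \<noteq> 0 \<and> x /\<^sub>R norm x \<in> B} \<in> sets borel"
  proof -
    have "{x::'a. x \<noteq> 0 \<and> x /\<^sub>R norm x \<in> B} = (-{0}) \<inter> (\<lambda>x. x /\<^sub>R norm x) -` B" by auto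
    also have "\<dots> \<in> sets borel" using B
      by (intro sets.Int compl_zero_borel measurable_sets_borel[OF sgn_borel_measurable])
    finally show ?thesis .
  qed
  have N1A: "emeasure N1 X = emeasure \<mu> {x. x \<noteq> 0 \<and> x /\<^sub>R norm x \<in> B \<and> norm x \<in> X}"
    if X: "X \<in> sets borel" for X
  proof -
    have "emeasure N1 X = emeasure (density \<mu> (\<lambda>x. indicator {x. x \<noteq> 0 \<and> x /\<^sub>R norm x \<in> B} x)) (norm -` X)"
      unfolding N1_def using X by (subst emeasure_distr) (auto simp: meas_mu_iff measurable_sets_borel[OF borel_measurable_norm X])
    also have "\<dots> = (\<integral>\<^sup>+x. indicator {x. x \<noteq> 0 \<and> x /\<^sub>R norm x \<in> B} x * indicator (norm -` X) x \<partial>\<mu>)"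
      using X by (intro emeasure_density) (auto simp: meas_mu_iff sets_eq measurable_sets_borel[OF borel_measurable_norm X])
    also have "\<dots> = (\<integral>\<^sup>+x. indicator {x. x \<noteq> 0 \<and> x /\<^sub>R norm x \<in> B \<and> norm x \<in> X} x \<partial>\<mu>)"
      by (intro nn_integral_cong) (auto split: split_indicator)
    also have "\<dots> = emeasure \<mu> {x. x \<noteq> 0 \<and> x /\<^sub>R norm x \<in> B \<and> norm x \<in> X}"
    proof (rule nn_integral_indicator)
      have "{x. x \<noteq> 0 \<and> x /\<^sub>R norm x \<in> B \<and> norm x \<in> X} = {x::'a. x \<noteq> 0 \<and> x /\<^sub>R norm x \<in> B} \<inter> norm -` X"
        by auto
      also have "\<dots> \<in> sets borel" using X by (intro sets.Int PB measurable_sets_borel[OF borel_measurable_norm])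
      finally show "{x. x \<noteq> 0 \<and> x /\<^sub>R norm x \<in> B \<and> norm x \<in> X} \<in> sets \<mu>" by (simp add: sets_eq)
    qed
    finally show ?thesis .
  qed
  have N2A: "emeasure N2 X = emeasure sph B * emeasure (rad_measure d) X" if "X \<in> sets borel" for X
    unfolding N2_def using that by (subst emeasure_density) (auto intro!: nn_integral_cmult_indicator)
  have lt1: "emeasure N1 {..<b} = (if 0 < b then emeasure \<mu> (cone b B) else 0)" for b
  proof -
    have "{x::'a. x \<noteq> 0 \<and> x /\<^sub>R norm x \<in> B \<and> norm x \<in> {..<b}} = (if 0 < b then cone b B else {})"
    proof (cases "0 < b")
      case True then show ?thesis by (auto simp: cone_def)
    next
      case False
      have "\<not> norm x < b" for x :: 'a using False norm_ge_zero[of x] by linarith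
      then show ?thesis using False by auto
    qed
    then show ?thesis by (simp add: N1A)
  qed
  have "N1 = N2"
  proof (rule measure_eqI_lessThan')
    show "sets N1 = sets borel" "sets N2 = sets borel" by (auto simp: N1_def N2_def)
    show "emeasure N1 {..<b} < \<infinity>" for b using cone_fin[OF B] by (simp add: lt1)
    show "emeasure N1 {..<b} = emeasure N2 {..<b}" for b
    proof (cases "0 < b")
      case True
      have "emeasure N2 {..<b} = emeasure sph B * emeasure (rad_measure d) {..<b}"
        by (rule N2A) simp
      also have "\<dots> = of_nat d * emeasure \<mu> (cone 1 B) * ennreal (b ^ d / d)"
        using True by (simp only: emeasure_sph[OF B] nn_integral_power_lessThan[OF d_pos]) (simp add: max_def)
      also have "\<dots> = ennreal (b^d) * emeasure \<mu> (cone 1 B)"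
      proof -
        have "of_nat d * ennreal (b ^ d / d) = ennreal (b^d)"
        proof -
          have "of_nat d * ennreal (b ^ d / d) = ennreal (real d) * ennreal (b ^ d / d)"
            by (simp add: ennreal_of_nat_eq_real_of_nat)
          also have "\<dots> = ennreal (real d * (b ^ d / d))"
            using True by (intro ennreal_mult[symmetric]) auto
          also have "real d * (b ^ d / d) = b^d" using d_pos by simp
          finally show ?thesis .
        qed
        then show ?thesis by (metis mult.assoc mult.commute)
      qed
      also have "\<dots> = emeasure \<mu> (cone b B)" using cone_scale[OF B True] by simp
      finally show ?thesis using True by (simp add: lt1)
    next
      case False
      have "emeasure N2 {..<b} = emeasure sph B * emeasure (rad_measure d) {..<b}"
        by (rule N2A) simp
      also have "\<dots> = 0"
        using False d_pos by (simp only: nn_integral_power_lessThan[OF d_pos]) (simp add: max_def)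
      finally show ?thesis using False by (simp add: lt1)
    qed
  qed
  then have "emeasure (rad_measure d) A * emeasure sph B = emeasure N1 A"
    using A by (simp add: N2A mult.commute)
  also have "\<dots> = emeasure (distr polD (borel \<Otimes>\<^sub>M borel) polmap) (A \<times> B)"
  proof -
    have "emeasure (distr polD (borel \<Otimes>\<^sub>M borel) polmap) (A \<times> B) = emeasure polD (polmap -` (A \<times> B))"
      using A B by (subst emeasure_distr) auto
    also have "\<dots> = (\<integral>\<^sup>+x. indicator (-{0}) x * indicator (polmap -` (A \<times> B)) x \<partial>\<mu>)"
      unfolding polD_def using A B by (intro emeasure_density) (auto simp: meas_mu_iff sets_eq polmap_pre)
    also have "\<dots> = (\<integral>\<^sup>+x. indicator {x. x \<noteq> 0 \<and> x /\<^sub>R norm x \<in> B \<and> norm x \<in> A} x \<partial>\<mu>)"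
      by (intro nn_integral_cong) (auto simp: polmap_def split: split_indicator)
    also have "\<dots> = emeasure \<mu> {x. x \<noteq> 0 \<and> x /\<^sub>R norm x \<in> B \<and> norm x \<in> A}"
    proof (rule nn_integral_indicator)
      have "{x. x \<noteq> 0 \<and> x /\<^sub>R norm x \<in> B \<and> norm x \<in> A} = {x::'a. x \<noteq> 0 \<and> x /\<^sub>R norm x \<in> B} \<inter> norm -` A"
        by auto
      also have "\<dots> \<in> sets borel" using A by (intro sets.Int PB measurable_sets_borel[OF borel_measurable_norm])
      finally show "{x. x \<noteq> 0 \<and> x /\<^sub>R norm x \<in> B \<and> norm x \<in> A} \<in> sets \<mu>" by (simp add: sets_eq)
    qed
    finally show ?thesis using A by (simp add: N1A)
  qed
  finally show ?thesis .
qed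

lemma polar_pair: "rad_measure d \<Otimes>\<^sub>M sph = distr polD (borel \<Otimes>\<^sub>M borel) polmap"
proof (rule pair_measure_eqI)
  show "sigma_finite_measure (rad_measure d)" by (rule sigma_finite_rad[OF d_pos])
  show "sigma_finite_measure sph"
  proof -
    interpret finite_measure sph by (rule finite_sph)
    show ?thesis by (rule sigma_finite_measure_axioms)
  qed
  show "sets (rad_measure d \<Otimes>\<^sub>M sph) = sets (distr polD (borel \<Otimes>\<^sub>M borel) polmap)"
    by (simp cong: sets_pair_measure_cong)
  show "emeasure (rad_measure d) A * emeasure sph B = emeasure (distr polD (borel \<Otimes>\<^sub>M borel) polmap) (A \<times> B)"
    if "A \<in> sets (rad_measure d)" "B \<in> sets sph" for A B
    using that by (intro emeasure_pair_rect) auto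
qed

lemma sigma_finite_sph: "sigma_finite_measure sph"
proof -
  interpret finite_measure sph by (rule finite_sph)
  show ?thesis by (rule sigma_finite_measure_axioms)
qed

lemma AE_nonzero: "AE x in \<mu>. x \<noteq> 0"
  by (rule AE_I[where N="{0}"]) (auto simp: zero_null sets_eq)

lemma polar_nn:
  assumes f[measurable]: "f \<in> borel_measurable borel"
  shows "(\<integral>\<^sup>+x. f x \<partial>\<mu>) =
    (\<integral>\<^sup>+s. ennreal (indicator {0<..} s * s^(d-1)) * (\<integral>\<^sup>+y. f (s *\<^sub>R y) \<partial>sph) \<partial>lborel)"
proof -
  interpret pair_sigma_finite "rad_measure d" sph
  proof -
    interpret finite_measure sph by (rule finite_sph)
    show "pair_sigma_finite (rad_measure d) sph"
      by (intro pair_sigma_finite.intro sigma_finite_rad d_pos sigma_finite_measure_axioms)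
  qed
  have g[measurable]: "(\<lambda>p. f (fst p *\<^sub>R snd p)) \<in> borel_measurable (borel \<Otimes>\<^sub>M borel)"
    by measurable
  have "(\<integral>\<^sup>+x. f x \<partial>\<mu>) = (\<integral>\<^sup>+x. indicator (-{0}) x * f x \<partial>\<mu>)"
    by (rule nn_integral_cong_AE) (use AE_nonzero in eventually_elim, auto)
  also have "\<dots> = (\<integral>\<^sup>+x. f x \<partial>polD)"
    unfolding polD_def by (subst nn_integral_density) (auto simp: meas_mu_iff)
  also have "\<dots> = (\<integral>\<^sup>+x. (\<lambda>p. f (fst p *\<^sub>R snd p)) (polmap x) \<partial>polD)"
  proof (intro nn_integral_cong)
    fix x :: 'a show "f x = (\<lambda>p. f (fst p *\<^sub>R snd p)) (polmap x)"
      by (cases "x = 0") (auto simp: polmap_def)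
  qed
  also have "\<dots> = (\<integral>\<^sup>+p. f (fst p *\<^sub>R snd p) \<partial>(distr polD (borel \<Otimes>\<^sub>M borel) polmap))"
    by (subst nn_integral_distr) auto
  also have "\<dots> = (\<integral>\<^sup>+p. f (fst p *\<^sub>R snd p) \<partial>(rad_measure d \<Otimes>\<^sub>M sph))"
    by (simp add: polar_pair)
  also have "\<dots> = (\<integral>\<^sup>+s. (\<integral>\<^sup>+y. f (s *\<^sub>R y) \<partial>sph) \<partial>rad_measure d)"
  proof -
    have g': "(\<lambda>p. f (fst p *\<^sub>R snd p)) \<in> borel_measurable (rad_measure d \<Otimes>\<^sub>M sph)"
      using g by (simp add: measurable_cong_sets[OF sets_pair_measure_cong[OF sets_rad_measure sets_sph] refl])
    show ?thesis using sigma_finite_measure.nn_integral_fst[OF sigma_finite_sph g'] by simp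
  qed
  also have "\<dots> = (\<integral>\<^sup>+s. ennreal (indicator {0<..} s * s^(d-1)) * (\<integral>\<^sup>+y. f (s *\<^sub>R y) \<partial>sph) \<partial>lborel)"
    unfolding rad_measure_def
    by (subst nn_integral_density) (auto intro!: borel_measurable_nn_integral simp: measurable_cong_sets[OF sets_pair_measure_cong[OF refl sets_sph] refl])
  finally show ?thesis .
qed

lemma distr_scale: assumes c: "0 < c"
  shows "distr \<mu> borel (\<lambda>x. c *\<^sub>R x) = density \<mu> (\<lambda>_. ennreal ((1/c)^d))"
proof (rule measure_eqI)
  fix A assume "A \<in> sets (distr \<mu> borel (\<lambda>x. c *\<^sub>R x))"
  then have A: "A \<in> sets borel" by simp
  have "emeasure (distr \<mu> borel (\<lambda>x. c *\<^sub>R x)) A = emeasure \<mu> ((\<lambda>x. c *\<^sub>R x) -` A)"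
    using A by (subst emeasure_distr) (auto simp: meas_mu_iff)
  also have "\<dots> = ennreal ((1/c)^d) * emeasure \<mu> A" by (rule scale[OF c A])
  also have "\<dots> = emeasure (density \<mu> (\<lambda>_. ennreal ((1/c)^d))) A"
    using A by (subst emeasure_density) (auto simp: sets_eq nn_integral_cmult_indicator)
  finally show "emeasure (distr \<mu> borel (\<lambda>x. c *\<^sub>R x)) A = emeasure (density \<mu> (\<lambda>_. ennreal ((1/c)^d))) A" .
qed (simp add: sets_eq)

lemma nn_scale:
  assumes c: "0 < c" and h[measurable]: "h \<in> borel_measurable borel"
  shows "(\<integral>\<^sup>+x. h (c *\<^sub>R x) \<partial>\<mu>) = ennreal ((1/c)^d) * (\<integral>\<^sup>+x. h x \<partial>\<mu>)"
proof -
  have "(\<integral>\<^sup>+x. h (c *\<^sub>R x) \<partial>\<mu>) = (\<integral>\<^sup>+x. h x \<partial>distr \<mu> borel (\<lambda>x. c *\<^sub>R x))"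
    by (subst nn_integral_distr) (auto simp: meas_mu_iff)
  also have "\<dots> = ennreal ((1/c)^d) * (\<integral>\<^sup>+x. h x \<partial>\<mu>)"
    unfolding distr_scale[OF c] by (subst nn_integral_density) (auto simp: meas_mu_iff nn_integral_cmult)
  finally show ?thesis .
qed

lemma pre_ball: "0 < s \<Longrightarrow> (\<lambda>x. (1/s) *\<^sub>R x) -` ball 0 1 = ball (0::'a) s"
  by (auto simp: mem_ball_0 field_simps)

lemma sigma_finite_mu: "sigma_finite_measure \<mu>"
proof
  show "\<exists>A. countable A \<and> A \<subseteq> sets \<mu> \<and> \<Union> A = space \<mu> \<and> (\<forall>a\<in>A. emeasure \<mu> a \<noteq> \<infinity>)"
  proof (intro exI[of _ "range (\<lambda>n::nat. ball (0::'a) (real (Suc n)))"] conjI)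
    show "\<Union> (range (\<lambda>n::nat. ball (0::'a) (real (Suc n)))) = space \<mu>"
    proof -
      have "x \<in> ball 0 (real (Suc (nat \<lceil>norm x\<rceil>)))" for x :: 'a
        using le_of_int_ceiling[of "norm x"] by (simp add: mem_ball_0) linarith
      then have "x \<in> (\<Union>n. ball (0::'a) (real (Suc n)))" for x by blast
      then show ?thesis by auto
    qed
    show "\<forall>a\<in>range (\<lambda>n::nat. ball (0::'a) (real (Suc n))). emeasure \<mu> a \<noteq> \<infinity>"
    proof
      fix a assume "a \<in> range (\<lambda>n::nat. ball (0::'a) (real (Suc n)))"
      then obtain n where a: "a = ball 0 (real (Suc n))" by auto
      have "(\<lambda>x. (1 / real (Suc n)) *\<^sub>R x) -` ball 0 1 = a"
        unfolding a by (rule pre_ball) simp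
      then have "emeasure \<mu> a = ennreal ((1/(1 / real (Suc n)))^d) * emeasure \<mu> (ball 0 1)"
        using scale[of "1 / real (Suc n)" "ball 0 1"] by simp
      then show "emeasure \<mu> a \<noteq> \<infinity>" using ball_fin by (simp add: ennreal_mult_eq_top_iff)
    qed
  qed (auto simp: sets_eq)
qed

lemma AE_sph_norm: "AE y in sph. norm y = 1"
proof -
  have "AE x in density \<mu> (\<lambda>x. indicator (ball 0 1 - {0}) x * of_nat d). norm (x /\<^sub>R norm x) = 1"
    by (subst AE_density) (auto simp: meas_mu_iff split: split_indicator)
  then show ?thesis unfolding sph_def
    by (subst AE_distr_iff) auto
qed

end

lemma lborel_scale_nn:
  fixes h :: "'a::euclidean_space \<Rightarrow> ennreal"
  assumes h[measurable]: "h \<in> borel_measurable borel" and c: "0 < c"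
  shows "(\<integral>\<^sup>+y. h (c *\<^sub>R y) \<partial>lborel) = ennreal ((1/c)^DIM('a)) * (\<integral>\<^sup>+y. h y \<partial>lborel)"
proof -
  have "(\<integral>\<^sup>+y. h y \<partial>lborel) = (\<integral>\<^sup>+y. h y \<partial>(density (distr lborel borel (\<lambda>x. 0 + c *\<^sub>R x)) (\<lambda>_. \<bar>c\<bar>^DIM('a))))"
    using lborel_affine[of c 0] c by (subst (1) lborel_affine[of c 0]) auto
  also have "\<dots> = ennreal (c^DIM('a)) * (\<integral>\<^sup>+y. h (c *\<^sub>R y) \<partial>lborel)"
    using c by (simp add: nn_integral_density nn_integral_distr nn_integral_cmult)
  finally have eq: "(\<integral>\<^sup>+y. h y \<partial>lborel) = ennreal (c^DIM('a)) * (\<integral>\<^sup>+y. h (c *\<^sub>R y) \<partial>lborel)" .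
  have "ennreal ((1/c)^DIM('a)) * ennreal (c^DIM('a)) = 1"
    using c by (simp add: ennreal_mult[symmetric] power_mult_distrib[symmetric])
  then show ?thesis unfolding eq by (metis mult.assoc mult_1)
qed

lemma scaling_lborel: "scaling_measure (lborel :: 'a::euclidean_space measure) DIM('a)"
proof
  fix c :: real and A :: "'a set" assume c: "0 < c" and A: "A \<in> sets borel"
  have "emeasure lborel ((\<lambda>x. c *\<^sub>R x) -` A) = (\<integral>\<^sup>+y. indicator A (c *\<^sub>R y) \<partial>lborel)"
    using A by (subst nn_integral_indicator[symmetric]) (auto intro!: nn_integral_cong measurable_sets_borel[OF _ A] split: split_indicator)
  also have "\<dots> = ennreal ((1/c)^DIM('a)) * emeasure lborel A"
    using A c by (subst lborel_scale_nn) auto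
  finally show "emeasure lborel ((\<lambda>x. c *\<^sub>R x) -` A) = ennreal ((1/c)^DIM('a)) * emeasure lborel A" .
next
  show "emeasure lborel (ball (0::'a) 1) < \<infinity>" by (rule emeasure_lborel_ball_finite)
qed auto

lemma sph_lborel_eq:
  "scaling_measure.sph (lborel :: 'a::euclidean_space measure) DIM('a) =
   distr (density lborel (\<lambda>x. indicator (ball 0 1 - {0}) x * of_nat DIM('a))) borel (\<lambda>x. x /\<^sub>R norm x)"
  using scaling_measure.sph_def[OF scaling_lborel] by simp

lemma PiM_scale_nn:
  fixes I :: "'i set"
  assumes I: "finite I" and c: "0 < c"
  shows "f \<in> borel_measurable (PiM I (\<lambda>_. lborel::'a::euclidean_space measure)) \<Longrightarrow>
     (\<integral>\<^sup>+g. f (\<lambda>j\<in>I. c *\<^sub>R g j) \<partial>PiM I (\<lambda>_. lborel)) =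
     ennreal ((1/c)^DIM('a))^card I * (\<integral>\<^sup>+g. f g \<partial>PiM I (\<lambda>_. lborel))"
  using I
proof (induction I arbitrary: f rule: finite_induct)
  case empty
  then show ?case
    by (simp add: PiM_empty nn_integral_count_space_finite)
next
  case (insert i I)
  interpret product_sigma_finite "\<lambda>_. lborel :: 'a measure" by standard
  let ?k = "ennreal ((1/c)^DIM('a))"
  note [measurable] = insert.prems
  define F where "F = (\<lambda>z. \<integral>\<^sup>+y. f (z(i := y)) \<partial>(lborel::'a measure))"
  have Fm[measurable]: "F \<in> borel_measurable (PiM I (\<lambda>_. lborel))"
    unfolding F_def by measurable
  have "(\<integral>\<^sup>+g. f (\<lambda>j\<in>insert i I. c *\<^sub>R g j) \<partial>PiM (insert i I) (\<lambda>_. lborel)) =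
     (\<integral>\<^sup>+x. \<integral>\<^sup>+y. f (\<lambda>j\<in>insert i I. c *\<^sub>R (x(i := y)) j) \<partial>lborel \<partial>PiM I (\<lambda>_. lborel))"
    using insert by (subst product_nn_integral_insert) auto
  also have "\<dots> = (\<integral>\<^sup>+x. \<integral>\<^sup>+y. f ((\<lambda>j\<in>I. c *\<^sub>R x j)(i := c *\<^sub>R y)) \<partial>lborel \<partial>PiM I (\<lambda>_. lborel))"
    using insert
    by (intro nn_integral_cong arg_cong[where f=f]) (auto simp: fun_eq_iff)
  also have "\<dots> = (\<integral>\<^sup>+x. ?k * F (\<lambda>j\<in>I. c *\<^sub>R x j) \<partial>PiM I (\<lambda>_. lborel))"
    unfolding F_def using c
    by (intro nn_integral_cong, subst lborel_scale_nn) auto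
  also have "\<dots> = ?k * (\<integral>\<^sup>+x. F (\<lambda>j\<in>I. c *\<^sub>R x j) \<partial>PiM I (\<lambda>_. lborel))"
    by (subst nn_integral_cmult) auto
  also have "\<dots> = ?k * (?k ^ card I * (\<integral>\<^sup>+x. F x \<partial>PiM I (\<lambda>_. lborel)))"
    using insert.IH[OF Fm] by (simp add: restrict_def)
  also have "\<dots> = ?k ^ card (insert i I) * (\<integral>\<^sup>+g. f g \<partial>PiM (insert i I) (\<lambda>_. lborel))"
    using insert unfolding F_def by (subst product_nn_integral_insert) (auto simp: mult.assoc)
  finally show ?case .
qed

lemma measurable_vec_lambda[measurable]:
  fixes f :: "'x \<Rightarrow> 'm::finite \<Rightarrow> 'a::euclidean_space"
  assumes "\<And>j. (\<lambda>x. f x j) \<in> borel_measurable M"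
  shows "(\<lambda>x. \<chi> j. f x j) \<in> borel_measurable M"
proof (subst borel_measurable_euclidean_space, intro ballI)
  fix b :: "'a^'m" assume "b \<in> Basis"
  then obtain j e where b: "b = axis j e" "e \<in> Basis" by (auto simp: Basis_vec_def)
  show "(\<lambda>x. (\<chi> j. f x j) \<bullet> b) \<in> borel_measurable M"
    unfolding b inner_axis vec_lambda_beta by (intro borel_measurable_inner assms borel_measurable_const)
qed

lemma measurable_vec_nth[measurable]:
  "(\<lambda>z::'a::euclidean_space^'m::finite. z $ j) \<in> borel_measurable borel"
proof (subst borel_measurable_euclidean_space, intro ballI)
  fix e :: 'a assume "e \<in> Basis"
  have "(\<lambda>z::'a^'m. z $ j \<bullet> e) = (\<lambda>z. z \<bullet> axis j e)" by (simp add: inner_axis)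
  then show "(\<lambda>z::'a^'m. z $ j \<bullet> e) \<in> borel_measurable borel" by simp
qed

lemma prod_Basis_vec:
  "(\<Prod>b\<in>(Basis::('a::euclidean_space^'m::finite) set). F b) = (\<Prod>j\<in>UNIV. \<Prod>e\<in>Basis. F (axis j e))"
proof -
  have "(Basis::('a^'m) set) = (\<Union>j\<in>UNIV. (\<lambda>e. axis j e) ` Basis)"
    by (auto simp: Basis_vec_def)
  note eq = this
  have "(\<Prod>b\<in>(Basis::('a^'m) set). F b) = (\<Prod>j\<in>UNIV. \<Prod>b\<in>(\<lambda>e. axis j e) ` Basis. F b)"
    unfolding eq by (rule prod.UNION_disjoint) (auto simp: axis_eq_axis nonzero_Basis)
  also have "\<dots> = (\<Prod>j\<in>UNIV. \<Prod>e\<in>Basis. F (axis j e))"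
    by (intro prod.cong refl, subst prod.reindex) (auto simp: inj_on_def axis_eq_axis nonzero_Basis)
  finally show ?thesis .
qed

lemma lborel_vec_PiM:
  "(lborel :: ('a::euclidean_space^'m::finite) measure) = distr (PiM UNIV (\<lambda>_. lborel::'a measure)) borel (\<lambda>g. \<chi> j. g j)"
proof (rule lborel_eqI)
  interpret product_sigma_finite "\<lambda>_. lborel::'a measure" by standard
  fix l u :: "'a^'m"
  assume le: "\<And>b. b \<in> Basis \<Longrightarrow> l \<bullet> b \<le> u \<bullet> b"
  have le': "l $ j \<bullet> e \<le> u $ j \<bullet> e" if "e \<in> Basis" for j e
    using le[of "axis j e"] that by (simp add: inner_axis)
  have pre: "(\<lambda>g. \<chi> j. g j) -` box l u \<inter> space (PiM UNIV (\<lambda>_. lborel::'a measure)) =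
     PiE UNIV (\<lambda>j. box (l $ j) (u $ j))"
    by (auto simp: space_PiM mem_box Basis_vec_def inner_axis PiE_iff extensional_def)
  have "emeasure (distr (PiM UNIV (\<lambda>_. lborel::'a measure)) borel (\<lambda>g. \<chi> j. g j)) (box l u) =
     emeasure (PiM UNIV (\<lambda>_. lborel::'a measure)) (PiE UNIV (\<lambda>j. box (l $ j) (u $ j)))"
    by (subst emeasure_distr) (auto simp: pre)
  also have "\<dots> = (\<Prod>j\<in>UNIV. emeasure lborel (box (l $ j) (u $ j)))"
    by (rule emeasure_PiM) auto
  also have "\<dots> = (\<Prod>j\<in>UNIV. ennreal (\<Prod>e\<in>Basis. (u $ j - l $ j) \<bullet> e))"
    using le' by (intro prod.cong refl) (simp add: inner_diff_left)
  also have "\<dots> = ennreal (\<Prod>j\<in>UNIV. \<Prod>e\<in>Basis. (u $ j - l $ j) \<bullet> e)"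
    using le' by (intro prod_ennreal prod_nonneg) (auto simp: inner_diff_left)
  also have "\<dots> = (\<Prod>b\<in>Basis. (u - l) \<bullet> b)"
    by (simp add: prod_Basis_vec inner_axis)
  finally show "emeasure (distr (PiM UNIV (\<lambda>_. lborel::'a measure)) borel (\<lambda>g. \<chi> j. g j)) (box l u) = (\<Prod>b\<in>Basis. (u - l) \<bullet> b)" .
qed simp

definition emb :: "'m::finite \<Rightarrow> ('m \<Rightarrow> 'a::euclidean_space) \<Rightarrow> 'a^'m" where
  "emb k g = (\<chi> j. if j = k then 0 else g j)"
definition insk :: "'m::finite \<Rightarrow> 'a::euclidean_space \<Rightarrow> 'a^'m" where
  "insk k v = (\<chi> j. if j = k then v else 0)"
definition muU :: "'m::finite \<Rightarrow> ('a::euclidean_space^'m) measure" where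
  "muU k = distr (PiM (UNIV - {k}) (\<lambda>_. lborel)) borel (emb k)"

lemma emb_meas[measurable]: "emb k \<in> borel_measurable (PiM (UNIV - {k}) (\<lambda>_. lborel::'a::euclidean_space measure))"
  unfolding emb_def
proof (rule measurable_vec_lambda)
  fix j show "(\<lambda>x. if j = k then 0 else x j) \<in> borel_measurable (PiM (UNIV - {k}) (\<lambda>_. lborel::'a measure))"
    by (cases "j = k") auto
qed

lemma insk_meas[measurable]: "insk k \<in> borel_measurable borel"
  unfolding insk_def by measurable

lemma sets_muU[simp, measurable_cong]: "sets (muU k) = sets borel" by (simp add: muU_def)
lemma space_muU[simp]: "space (muU k) = UNIV" by (simp add: muU_def)

lemma lborel_V_split:
  fixes \<Phi> :: "'a::euclidean_space^'m::finite \<Rightarrow> ennreal"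
  assumes [measurable]: "\<Phi> \<in> borel_measurable borel"
  shows "(\<integral>\<^sup>+z. \<Phi> z \<partial>lborel) = (\<integral>\<^sup>+w. (\<integral>\<^sup>+v. \<Phi> (w + insk k v) \<partial>lborel) \<partial>muU k)"
proof -
  interpret product_sigma_finite "\<lambda>_. lborel::'a measure" by standard
  have m1: "(\<lambda>g. \<Phi> (\<chi> j. g j)) \<in> borel_measurable (PiM UNIV (\<lambda>_. lborel::'a measure))"
    by measurable
  have "(\<integral>\<^sup>+z. \<Phi> z \<partial>lborel) = (\<integral>\<^sup>+g. \<Phi> (\<chi> j. g j) \<partial>PiM UNIV (\<lambda>_. lborel::'a measure))"
    by (subst lborel_vec_PiM) (simp add: nn_integral_distr m1)
  also have "\<dots> = (\<integral>\<^sup>+g. \<Phi> (\<chi> j. g j) \<partial>PiM (insert k (UNIV - {k})) (\<lambda>_. lborel::'a measure))"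
    by (simp add: insert_absorb)
  also have "\<dots> = (\<integral>\<^sup>+x. \<integral>\<^sup>+y. \<Phi> (\<chi> j. (x(k := y)) j) \<partial>lborel \<partial>PiM (UNIV-{k}) (\<lambda>_. lborel::'a measure))"
    using m1 by (subst product_nn_integral_insert) (auto simp: insert_absorb)
  also have "\<dots> = (\<integral>\<^sup>+x. (\<lambda>w. \<integral>\<^sup>+v. \<Phi> (w + insk k v) \<partial>lborel) (emb k x) \<partial>PiM (UNIV-{k}) (\<lambda>_. lborel::'a measure))"
    by (intro nn_integral_cong arg_cong[where f=\<Phi>]) (auto simp: emb_def insk_def vec_eq_iff)
  also have "\<dots> = (\<integral>\<^sup>+w. (\<integral>\<^sup>+v. \<Phi> (w + insk k v) \<partial>lborel) \<partial>muU k)"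
    unfolding muU_def by (subst nn_integral_distr) auto
  finally show ?thesis .
qed

lemma emb_scale: "c *\<^sub>R emb k g = emb k (\<lambda>j\<in>UNIV - {k}. c *\<^sub>R g j)"
  by (auto simp: emb_def vec_eq_iff)

lemma scaling_muU:
  assumes m2: "2 \<le> CARD('m::finite)"
  shows "scaling_measure (muU k :: ('a::euclidean_space^'m) measure) (DIM('a) * (CARD('m) - 1))"
proof
  interpret product_sigma_finite "\<lambda>_. lborel::'a measure" by standard
  have cardJ: "card (UNIV - {k}) = CARD('m) - 1" by (simp add: card_Diff_singleton)
  show "sets (muU k :: ('a^'m) measure) = sets borel" by simp
  show "0 < DIM('a) * (CARD('m) - 1)" using m2 by simp
  fix c :: real and A :: "('a^'m) set" assume c: "0 < c" and A[measurable]: "A \<in> sets borel"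
  have "emeasure (muU k) ((\<lambda>x. c *\<^sub>R x) -` A) =
    (\<integral>\<^sup>+g. indicator A (emb k (\<lambda>j\<in>UNIV - {k}. c *\<^sub>R g j)) \<partial>PiM (UNIV - {k}) (\<lambda>_. lborel::'a measure))"
  proof -
    let ?P = "PiM (UNIV - {k}) (\<lambda>_. lborel::'a measure)"
    have m: "(\<lambda>g. c *\<^sub>R emb k g) \<in> borel_measurable ?P" by measurable
    have S: "(\<lambda>g. c *\<^sub>R emb k g) -` A \<inter> space ?P \<in> sets ?P" by (rule measurable_sets[OF m A])
    have "emeasure (muU k) ((\<lambda>x. c *\<^sub>R x) -` A) = emeasure ?P ((\<lambda>g. c *\<^sub>R emb k g) -` A \<inter> space ?P)"
      unfolding muU_def by (subst emeasure_distr) (auto intro!: arg_cong2[where f=emeasure] measurable_sets_borel[OF _ A])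
    also have "\<dots> = (\<integral>\<^sup>+g. indicator ((\<lambda>g. c *\<^sub>R emb k g) -` A \<inter> space ?P) g \<partial>?P)"
      using S by simp
    also have "\<dots> = (\<integral>\<^sup>+g. indicator A (emb k (\<lambda>j\<in>UNIV - {k}. c *\<^sub>R g j)) \<partial>?P)"
      by (intro nn_integral_cong) (auto simp: emb_scale[symmetric] split: split_indicator)
    finally show ?thesis .
  qed
  also have "\<dots> = ennreal ((1/c)^DIM('a))^card (UNIV - {k}) *
     (\<integral>\<^sup>+g. indicator A (emb k g) \<partial>PiM (UNIV - {k}) (\<lambda>_. lborel::'a measure))"
    using c by (subst PiM_scale_nn[where f="\<lambda>g. indicator A (emb k g)"]) auto
  also have "(\<integral>\<^sup>+g. indicator A (emb k g) \<partial>PiM (UNIV - {k}) (\<lambda>_. lborel::'a measure)) = emeasure (muU k) A"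
  proof -
    let ?P = "PiM (UNIV - {k}) (\<lambda>_. lborel::'a measure)"
    have S: "emb k -` A \<inter> space ?P \<in> sets ?P" by (rule measurable_sets[OF emb_meas A])
    have "(\<integral>\<^sup>+g. indicator A (emb k g) \<partial>?P) = (\<integral>\<^sup>+g. indicator (emb k -` A \<inter> space ?P) g \<partial>?P)"
      by (intro nn_integral_cong) (auto split: split_indicator)
    also have "\<dots> = emeasure (muU k) A" using S unfolding muU_def by (subst emeasure_distr) auto
    finally show ?thesis .
  qed
  also have "ennreal ((1/c)^DIM('a))^card (UNIV - {k}) = ennreal ((1/c)^(DIM('a) * (CARD('m) - 1)))"
    using c by (simp add: cardJ ennreal_power power_mult)
  finally show "emeasure (muU k) ((\<lambda>x. c *\<^sub>R x) -` A) = ennreal ((1 / c) ^ (DIM('a) * (CARD('m) - 1))) * emeasure (muU k) A" .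
next
  interpret product_sigma_finite "\<lambda>_. lborel::'a measure" by standard
  have sub: "emb k -` ball 0 1 \<inter> space (PiM (UNIV - {k}) (\<lambda>_. lborel::'a measure)) \<subseteq> PiE (UNIV - {k}) (\<lambda>_. ball 0 1)"
  proof
    fix g assume g: "g \<in> emb k -` ball 0 1 \<inter> space (PiM (UNIV - {k}) (\<lambda>_. lborel::'a measure))"
    have "norm (g j) < 1" if "j \<noteq> k" for j
    proof -
      have "norm (g j) = norm (emb k g $ j)" using that by (simp add: emb_def)
      also have "\<dots> \<le> norm (emb k g)" by (rule Finite_Cartesian_Product.norm_nth_le)
      finally show ?thesis using g by simp
    qed
    then show "g \<in> PiE (UNIV - {k}) (\<lambda>_. ball 0 1)" using g by (auto simp: space_PiM PiE_iff)
  qed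
  have PE: "PiE (UNIV - {k}) (\<lambda>_. ball (0::'a) 1) \<in> sets (PiM (UNIV - {k}) (\<lambda>_. lborel::'a measure))"
    by (rule sets_PiM_I_finite) auto
  have "emeasure (muU k :: ('a^'m) measure) (ball 0 1) = emeasure (PiM (UNIV - {k}) (\<lambda>_. lborel::'a measure)) (emb k -` ball 0 1 \<inter> space (PiM (UNIV - {k}) (\<lambda>_. lborel::'a measure)))"
    unfolding muU_def by (rule emeasure_distr) auto
  also have "\<dots> \<le> emeasure (PiM (UNIV - {k}) (\<lambda>_. lborel::'a measure)) (PiE (UNIV - {k}) (\<lambda>_. ball 0 1))"
    by (rule emeasure_mono[OF sub PE])
  also have "\<dots> = (\<Prod>j\<in>UNIV - {k}. emeasure lborel (ball (0::'a) 1))"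
    by (rule emeasure_PiM) auto
  also have "\<dots> < \<infinity>"
    using emeasure_lborel_ball_finite[of "0::'a" 1] by (simp add: power_less_top_ennreal)
  finally show "emeasure (muU k :: ('a^'m) measure) (ball 0 1) < \<infinity>" .
qed

lemma AE_muU: "AE w in muU k. w $ k = 0"
  unfolding muU_def by (subst AE_distr_iff) (auto simp: emb_def)

lemma norm_vec_sq: "norm (x::'a::real_normed_vector^'m::finite) ^ 2 = (\<Sum>j\<in>UNIV. norm (x $ j) ^ 2)"
  unfolding norm_vec_def L2_set_def by (simp add: sum_nonneg)

lemma norm_emb_insk:
  assumes "w $ k = 0"
  shows "norm (w + insk k v) ^ 2 = norm w ^ 2 + norm v ^ 2"
proof -
  have "norm (w + insk k v) ^ 2 = (\<Sum>j\<in>UNIV. norm ((w + insk k v) $ j) ^ 2)" by (rule norm_vec_sq)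
  also have "\<dots> = norm v ^ 2 + (\<Sum>j\<in>UNIV - {k}. norm ((w + insk k v) $ j) ^ 2)"
    by (subst sum.remove[of _ k]) (auto simp: insk_def assms)
  also have "(\<Sum>j\<in>UNIV - {k}. norm ((w + insk k v) $ j) ^ 2) = (\<Sum>j\<in>UNIV - {k}. norm (w $ j) ^ 2)"
    by (intro sum.cong) (auto simp: insk_def)
  finally have eq1: "norm (w + insk k v) ^ 2 = norm v ^ 2 + (\<Sum>j\<in>UNIV - {k}. norm (w $ j) ^ 2)" .
  have "norm w ^ 2 = (\<Sum>j\<in>UNIV - {k}. norm (w $ j) ^ 2)"
    by (subst norm_vec_sq, subst sum.remove[of _ k]) (auto simp: assms)
  then show ?thesis using eq1 by simp
qed

lemma sphere_eq: "scaling_measure.sph lborel DIM('x) = (sphere_measure :: 'x::euclidean_space measure)"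
  by (simp add: sph_lborel_eq sphere_measure_def)

lemma sets_sphere[simp, measurable_cong]: "sets (sphere_measure :: 'x::euclidean_space measure) = sets borel"
  by (simp add: sphere_measure_def)

lemma space_sphere[simp]: "space (sphere_measure :: 'x::euclidean_space measure) = UNIV"
  by (simp add: sphere_measure_def)

lemma insk_scale: "insk k (c *\<^sub>R v) = c *\<^sub>R insk k v"
  by (auto simp: insk_def vec_eq_iff)

lemma star_nn:
  fixes \<Phi> :: "'a::euclidean_space^'m::finite \<Rightarrow> ennreal" and k :: 'm
  assumes m2: "2 \<le> CARD('m)" and \<Phi>[measurable]: "\<Phi> \<in> borel_measurable borel"
  shows "(\<integral>\<^sup>+y. \<Phi> y \<partial>sphere_measure) =
    (\<integral>\<^sup>+w. ennreal (sqrt (1 + norm w ^ 2) powr - real DIM('a^'m)) *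
       (\<integral>\<^sup>+\<theta>. \<Phi> ((w + insk k \<theta>) /\<^sub>R sqrt (1 + norm w ^ 2)) \<partial>sphere_measure) \<partial>muU k)"
proof -
  interpret U: scaling_measure "muU k :: ('a^'m) measure" "DIM('a) * (CARD('m) - 1)"
    by (rule scaling_muU[OF m2])
  interpret L: scaling_measure "lborel :: 'a measure" "DIM('a)"
    by (rule scaling_lborel)
  interpret P: pair_sigma_finite "muU k :: ('a^'m) measure" "lborel :: 'a measure"
    by (intro pair_sigma_finite.intro U.sigma_finite_mu L.sigma_finite_mu)
  define d where "d = DIM('a) * (CARD('m) - 1)"
  define NN where "NN = DIM('a^'m)"
  have NN: "NN = d + DIM('a)" using m2 by (simp add: NN_def d_def algebra_simps)
  define \<rho> where "\<rho> w = sqrt (1 + norm w ^ 2)" for w :: "'a^'m"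
  have \<rho>_pos: "0 < \<rho> w" for w by (simp add: \<rho>_def add_pos_nonneg)
  define \<Psi> where "\<Psi> z = indicator (ball 0 1 - {0}) z * of_nat NN * \<Phi> (z /\<^sub>R norm z)" for z :: "'a^'m"
  have \<Psi>m[measurable]: "\<Psi> \<in> borel_measurable borel" unfolding \<Psi>_def by measurable
  define \<Xi> where "\<Xi> v w = ennreal (norm v ^ d) * indicator {..<1} (norm v * \<rho> w) * of_nat NN *
      \<Phi> ((w + insk k (v /\<^sub>R norm v)) /\<^sub>R \<rho> w)" for v :: 'a and w :: "'a^'m"
  have \<Xi>m[measurable]: "(\<lambda>(w, v). \<Xi> v w) \<in> borel_measurable (muU k \<Otimes>\<^sub>M lborel)"
    unfolding \<Xi>_def \<rho>_def by measurable
  have "(\<integral>\<^sup>+y. \<Phi> y \<partial>sphere_measure) = (\<integral>\<^sup>+z. \<Psi> z \<partial>lborel)"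
    unfolding sphere_measure_def \<Psi>_def NN_def
    by (subst nn_integral_distr) (auto simp: nn_integral_density)
  also have "\<dots> = (\<integral>\<^sup>+w. (\<integral>\<^sup>+v. \<Psi> (w + insk k v) \<partial>lborel) \<partial>muU k)"
    by (rule lborel_V_split) simp
  also have "\<dots> = (\<integral>\<^sup>+v. (\<integral>\<^sup>+w. \<Psi> (w + insk k v) \<partial>muU k) \<partial>lborel)"
    by (rule P.Fubini'[where f="\<lambda>w v. \<Psi> (w + insk k v)", symmetric]) measurable
  also have "\<dots> = (\<integral>\<^sup>+v. (\<integral>\<^sup>+w. \<Xi> v w \<partial>muU k) \<partial>lborel)"
  proof (rule nn_integral_cong_AE)
    show "AE v in lborel. (\<integral>\<^sup>+w. \<Psi> (w + insk k v) \<partial>muU k) = (\<integral>\<^sup>+w. \<Xi> v w \<partial>muU k)"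
      using AE_lborel_singleton[of "0::'a"]
    proof eventually_elim
      fix v :: 'a assume v: "v \<noteq> 0"
      define c where "c = norm v"
      have c: "0 < c" using v by (simp add: c_def)
      have h[measurable]: "(\<lambda>w. \<Psi> (w + insk k v)) \<in> borel_measurable borel" by measurable
      have "(\<integral>\<^sup>+w. \<Psi> (c *\<^sub>R w + insk k v) \<partial>muU k) = ennreal ((1/c)^d) * (\<integral>\<^sup>+w. \<Psi> (w + insk k v) \<partial>muU k)"
        unfolding d_def by (rule U.nn_scale[OF c h])
      then have "ennreal (c^d) * (\<integral>\<^sup>+w. \<Psi> (c *\<^sub>R w + insk k v) \<partial>muU k) =
          (ennreal (c^d) * ennreal ((1/c)^d)) * (\<integral>\<^sup>+w. \<Psi> (w + insk k v) \<partial>muU k)"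
        by (simp add: mult.assoc)
      also have "ennreal (c^d) * ennreal ((1/c)^d) = 1"
        using c by (simp add: ennreal_mult[symmetric] power_mult_distrib[symmetric])
      finally have eq: "(\<integral>\<^sup>+w. \<Psi> (w + insk k v) \<partial>muU k) = (\<integral>\<^sup>+w. ennreal (c^d) * \<Psi> (c *\<^sub>R w + insk k v) \<partial>muU k)"
        by (subst nn_integral_cmult) (auto simp: )
      also have "\<dots> = (\<integral>\<^sup>+w. \<Xi> v w \<partial>muU k)"
      proof (rule nn_integral_cong_AE)
        show "AE w in muU k. ennreal (c^d) * \<Psi> (c *\<^sub>R w + insk k v) = \<Xi> v w"
          using AE_muU[of k]
        proof eventually_elim
          fix w :: "'a^'m" assume wk: "w $ k = 0"
          define u where "u = v /\<^sub>R c"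
          have nu: "norm u = 1" using c by (simp add: u_def c_def)
          have z: "c *\<^sub>R w + insk k v = c *\<^sub>R (w + insk k u)"
            using c by (simp add: u_def insk_scale scaleR_add_right)
          have nwu: "norm (w + insk k u) = \<rho> w"
          proof -
            have "norm (w + insk k u) ^ 2 = 1 + norm w ^ 2" using norm_emb_insk[OF wk, of u] nu by simp
            then show ?thesis unfolding \<rho>_def using real_sqrt_unique[of "norm (w + insk k u)" "1 + norm w ^ 2"] by simp
          qed
          have nz: "norm (c *\<^sub>R w + insk k v) = c * \<rho> w"
            unfolding z using c nwu by simp
          have dir: "(c *\<^sub>R w + insk k v) /\<^sub>R norm (c *\<^sub>R w + insk k v) = (w + insk k u) /\<^sub>R \<rho> w"
            unfolding nz unfolding z using c \<rho>_pos[of w] by simp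
          have zne: "c *\<^sub>R w + insk k v \<noteq> 0"
          proof
            assume "c *\<^sub>R w + insk k v = 0"
            then have "norm (c *\<^sub>R w + insk k v) = 0" by simp
            with nz c \<rho>_pos[of w] show False by simp
          qed
          have ind: "indicator (ball 0 1 - {0}) (c *\<^sub>R w + insk k v) = (indicator {..<1} (c * \<rho> w) :: ennreal)"
            unfolding indicator_def using zne by (simp only: mem_ball_0 nz Diff_iff singleton_iff lessThan_iff) simp
          show "ennreal (c^d) * \<Psi> (c *\<^sub>R w + insk k v) = \<Xi> v w"
            unfolding \<Psi>_def \<Xi>_def dir ind u_def c_def[symmetric] by (simp add: mult.assoc)
        qed
      qed
      finally show "(\<integral>\<^sup>+w. \<Psi> (w + insk k v) \<partial>muU k) = (\<integral>\<^sup>+w. \<Xi> v w \<partial>muU k)" .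
    qed
  qed
  also have "\<dots> = (\<integral>\<^sup>+w. (\<integral>\<^sup>+v. \<Xi> v w \<partial>lborel) \<partial>muU k)"
    by (rule P.Fubini'[where f="\<lambda>w v. \<Xi> v w"]) (rule \<Xi>m)
  also have "\<dots> = (\<integral>\<^sup>+w. ennreal (\<rho> w powr - real NN) *
       (\<integral>\<^sup>+\<theta>. \<Phi> ((w + insk k \<theta>) /\<^sub>R \<rho> w) \<partial>sphere_measure) \<partial>muU k)"
  proof (rule nn_integral_cong)
    fix w :: "'a^'m"
    define G where "G = (\<integral>\<^sup>+\<theta>. \<Phi> ((w + insk k \<theta>) /\<^sub>R \<rho> w) \<partial>sphere_measure)"
    have \<Xi>m1[measurable]: "(\<lambda>v. \<Xi> v w) \<in> borel_measurable borel"
      unfolding \<Xi>_def by measurable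
    have "(\<integral>\<^sup>+v. \<Xi> v w \<partial>lborel) =
      (\<integral>\<^sup>+s. ennreal (indicator {0<..} s * s^(DIM('a)-1)) * (\<integral>\<^sup>+\<theta>. \<Xi> (s *\<^sub>R \<theta>) w \<partial>sphere_measure) \<partial>lborel)"
      using L.polar_nn[OF \<Xi>m1] by (simp add: sphere_eq)
    also have "\<dots> = (\<integral>\<^sup>+s. (of_nat NN * G) * (ennreal (indicator {0<..} s * s^(NN-1)) * indicator {..<1 / \<rho> w} s) \<partial>lborel)"
    proof (rule nn_integral_cong)
      fix s :: real
      show "ennreal (indicator {0<..} s * s^(DIM('a)-1)) * (\<integral>\<^sup>+\<theta>. \<Xi> (s *\<^sub>R \<theta>) w \<partial>sphere_measure) =
         (of_nat NN * G) * (ennreal (indicator {0<..} s * s^(NN-1)) * indicator {..<1 / \<rho> w} s)"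
      proof (cases "0 < s")
        case False then show ?thesis by (simp add: indicator_def)
      next
        case s: True
        have "(\<integral>\<^sup>+\<theta>. \<Xi> (s *\<^sub>R \<theta>) w \<partial>sphere_measure) =
           (\<integral>\<^sup>+\<theta>. (ennreal (s ^ d) * indicator {..<1} (s * \<rho> w) * of_nat NN) * \<Phi> ((w + insk k \<theta>) /\<^sub>R \<rho> w) \<partial>sphere_measure)"
        proof (rule nn_integral_cong_AE)
          show "AE \<theta> in sphere_measure. \<Xi> (s *\<^sub>R \<theta>) w = (ennreal (s ^ d) * indicator {..<1} (s * \<rho> w) * of_nat NN) * \<Phi> ((w + insk k \<theta>) /\<^sub>R \<rho> w)"
            using L.AE_sph_norm unfolding sphere_eq
          proof eventually_elim
            fix \<theta> :: 'a assume n1: "norm \<theta> = 1"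
            show "\<Xi> (s *\<^sub>R \<theta>) w = (ennreal (s ^ d) * indicator {..<1} (s * \<rho> w) * of_nat NN) * \<Phi> ((w + insk k \<theta>) /\<^sub>R \<rho> w)"
              unfolding \<Xi>_def using s n1 by simp
          qed
        qed
        also have "\<dots> = ennreal (s ^ d) * indicator {..<1} (s * \<rho> w) * of_nat NN * G"
          unfolding G_def by (subst nn_integral_cmult) auto
        finally have eq: "(\<integral>\<^sup>+\<theta>. \<Xi> (s *\<^sub>R \<theta>) w \<partial>sphere_measure) = ennreal (s ^ d) * indicator {..<1} (s * \<rho> w) * of_nat NN * G" .
        have ind: "(indicator {..<1} (s * \<rho> w) :: ennreal) = indicator {..<1 / \<rho> w} s"
          using \<rho>_pos[of w] by (simp add: indicator_def pos_less_divide_eq)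
        have pw: "ennreal (s^(DIM('a)-1)) * ennreal (s ^ d) = ennreal (s^(NN-1))"
        proof -
          have e: "DIM('a) - 1 + d = NN - 1" using DIM_positive[where 'a='a] NN by linarith
          have "s^(DIM('a)-1) * s ^ d = s^(NN-1)"
            by (simp only: power_add[symmetric] e)
          then show ?thesis using s by (simp add: ennreal_mult[symmetric])
        qed
        have i1: "indicator {0<..} s = (1::real)" using s by simp
        have "ennreal (indicator {0<..} s * s^(DIM('a)-1)) * (ennreal (s ^ d) * indicator {..<1 / \<rho> w} s * of_nat NN * G)
           = (ennreal (s^(DIM('a)-1)) * ennreal (s ^ d)) * indicator {..<1 / \<rho> w} s * (of_nat NN * G)"
          unfolding i1 by (simp add: mult_ac)
        also have "\<dots> = (of_nat NN * G) * (ennreal (indicator {0<..} s * s^(NN-1)) * indicator {..<1 / \<rho> w} s)"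
          unfolding pw i1 by (simp add: mult_ac)
        finally show ?thesis unfolding eq ind .
      qed
    qed
    also have "\<dots> = (of_nat NN * G) * emeasure (rad_measure NN) {..<1 / \<rho> w}"
      unfolding rad_measure_def
      by (subst nn_integral_cmult) (auto simp: emeasure_density)
    also have "\<dots> = ennreal (\<rho> w powr - real NN) * G"
    proof -
      have NNp: "0 < NN" by (simp add: NN_def)
      have "of_nat NN * ennreal ((1 / \<rho> w)^NN / NN) = ennreal (\<rho> w powr - real NN)"
      proof -
        have "real NN * ((1 / \<rho> w)^NN / NN) = \<rho> w powr - real NN"
          using NNp \<rho>_pos[of w] by (simp add: powr_minus powr_realpow power_one_over inverse_eq_divide)
        then show ?thesis using \<rho>_pos[of w]
          by (simp add: ennreal_of_nat_eq_real_of_nat ennreal_mult[symmetric])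
      qed
      moreover have em: "emeasure (rad_measure NN) {..<1 / \<rho> w} = ennreal ((1 / \<rho> w)^NN / NN)"
        using nn_integral_power_lessThan[OF NNp, of "1 / \<rho> w"] \<rho>_pos[of w] by (simp add: max_def)
      ultimately show ?thesis by (metis mult.assoc mult.commute)
    qed
    finally show "(\<integral>\<^sup>+v. \<Xi> v w \<partial>lborel) = ennreal (\<rho> w powr - real NN) * G" .
  qed
  finally show ?thesis unfolding \<rho>_def NN_def .
qed

lemma finite_sphere: "finite_measure (sphere_measure :: 'x::euclidean_space measure)"
  using scaling_measure.finite_sph[OF scaling_lborel] by (simp add: sphere_eq)

lemma star_measure:
  fixes k :: "'m::finite"
  assumes m2: "2 \<le> CARD('m)"
  shows "(sphere_measure :: ('a::euclidean_space^'m) measure) =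
    distr (density (muU k \<Otimes>\<^sub>M (sphere_measure :: 'a measure)) (\<lambda>(w, \<theta>). ennreal (sqrt (1 + norm w ^ 2) powr - real DIM('a^'m))))
      borel (\<lambda>(w, \<theta>). (w + insk k \<theta>) /\<^sub>R sqrt (1 + norm w ^ 2))"
    (is "_ = distr (density ?P ?g) borel ?T")
proof (rule measure_eqI)
  interpret U: scaling_measure "muU k :: ('a^'m) measure" "DIM('a) * (CARD('m) - 1)"
    by (rule scaling_muU[OF m2])
  interpret S: finite_measure "sphere_measure :: 'a measure" by (rule finite_sphere)
  interpret P: pair_sigma_finite "muU k :: ('a^'m) measure" "sphere_measure :: 'a measure"
    by (intro pair_sigma_finite.intro U.sigma_finite_mu S.sigma_finite_measure_axioms)
  fix A :: "('a^'m) set" assume "A \<in> sets (sphere_measure :: ('a^'m) measure)"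
  then have A[measurable]: "A \<in> sets borel" by simp
  have Tm[measurable]: "?T \<in> ?P \<rightarrow>\<^sub>M borel" by measurable
  have gm[measurable]: "?g \<in> borel_measurable ?P" by measurable
  have "emeasure (sphere_measure :: ('a^'m) measure) A = (\<integral>\<^sup>+y. indicator A y \<partial>sphere_measure)"
    by simp
  also have "\<dots> = (\<integral>\<^sup>+w. ennreal (sqrt (1 + norm w ^ 2) powr - real DIM('a^'m)) *
       (\<integral>\<^sup>+\<theta>. indicator A ((w + insk k \<theta>) /\<^sub>R sqrt (1 + norm w ^ 2)) \<partial>sphere_measure) \<partial>muU k)"
    by (rule star_nn[OF m2]) simp
  also have "\<dots> = (\<integral>\<^sup>+w. (\<integral>\<^sup>+\<theta>. ?g (w, \<theta>) * indicator A (?T (w, \<theta>)) \<partial>sphere_measure) \<partial>muU k)"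
    unfolding prod.case by (intro nn_integral_cong, subst nn_integral_cmult) auto
  also have "\<dots> = (\<integral>\<^sup>+p. ?g p * indicator A (?T p) \<partial>?P)"
  proof -
    have "(\<lambda>p. ?g p * indicator A (?T p)) \<in> borel_measurable ?P" by measurable
    from S.nn_integral_fst[OF this] show ?thesis by simp
  qed
  also have "\<dots> = emeasure (density ?P ?g) (?T -` A \<inter> space ?P)"
  proof -
    have Sm: "?T -` A \<inter> space ?P \<in> sets ?P" by (rule measurable_sets[OF Tm A])
    show ?thesis using Sm by (subst emeasure_density) (auto intro!: nn_integral_cong split: split_indicator)
  qed
  also have "\<dots> = emeasure (distr (density ?P ?g) borel ?T) A"
    by (subst emeasure_distr) auto
  finally show "emeasure (sphere_measure :: ('a^'m) measure) A = emeasure (distr (density ?P ?g) borel ?T) A" .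
qed simp

lemma star_norm_bound:
  fixes F :: "'a::euclidean_space^'m::finite \<Rightarrow> complex" and k :: 'm
  assumes m2: "2 \<le> CARD('m)" and F[measurable]: "F \<in> borel_measurable borel"
    and bnd: "\<And>y. norm (F y) \<le> B"
  shows "ennreal (norm (\<integral>y. F y \<partial>sphere_measure)) \<le>
    (\<integral>\<^sup>+w. ennreal (sqrt (1 + norm w ^ 2) powr - real DIM('a^'m)) *
       ennreal (norm (\<integral>\<theta>. F ((w + insk k \<theta>) /\<^sub>R sqrt (1 + norm w ^ 2)) \<partial>sphere_measure)) \<partial>muU k)"
proof -
  interpret U: scaling_measure "muU k :: ('a^'m) measure" "DIM('a) * (CARD('m) - 1)"
    by (rule scaling_muU[OF m2])
  interpret S: finite_measure "sphere_measure :: 'a measure" by (rule finite_sphere)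
  interpret P: pair_sigma_finite "muU k :: ('a^'m) measure" "sphere_measure :: 'a measure"
    by (intro pair_sigma_finite.intro U.sigma_finite_mu S.sigma_finite_measure_axioms)
  interpret SV: finite_measure "sphere_measure :: ('a^'m) measure" by (rule finite_sphere)
  let ?P = "muU k \<Otimes>\<^sub>M (sphere_measure :: 'a measure)"
  define \<gamma> where "\<gamma> w = sqrt (1 + norm w ^ 2) powr - real DIM('a^'m)" for w :: "'a^'m"
  define g where "g p = \<gamma> (fst p)" for p :: "('a^'m) \<times> 'a"
  define T where "T p = (fst p + insk k (snd p)) /\<^sub>R sqrt (1 + norm (fst p) ^ 2)" for p :: "('a^'m) \<times> 'a"
  have gm[measurable]: "g \<in> borel_measurable ?P" unfolding g_def \<gamma>_def by measurable
  have Tm[measurable]: "T \<in> ?P \<rightarrow>\<^sub>M borel" unfolding T_def by measurable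
  have g0: "0 \<le> g p" for p by (simp add: g_def \<gamma>_def)
  have M: "(sphere_measure :: ('a^'m) measure) = distr (density ?P (\<lambda>p. ennreal (g p))) borel T"
  proof -
    have e1: "(\<lambda>(w, \<theta>). ennreal (sqrt (1 + norm w ^ 2) powr - real DIM('a^'m))) = (\<lambda>p. ennreal (g p))"
      by (auto simp: g_def \<gamma>_def fun_eq_iff)
    have e2: "(\<lambda>(w, \<theta>). (w + insk k \<theta>) /\<^sub>R sqrt (1 + norm w ^ 2)) = T"
      by (auto simp: T_def fun_eq_iff)
    show ?thesis using star_measure[OF m2, of k, where 'a='a] unfolding e1 e2 .
  qed
  have fin: "(\<integral>\<^sup>+p. ennreal (g p) \<partial>?P) < \<infinity>"
  proof -
    have "(\<integral>\<^sup>+p. ennreal (g p) \<partial>?P) = emeasure (density ?P (\<lambda>p. ennreal (g p))) (space ?P)"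
      using sets.top[of ?P] by (subst emeasure_density) auto
    also have "\<dots> = emeasure (distr (density ?P (\<lambda>p. ennreal (g p))) borel T) UNIV"
      by (subst emeasure_distr) auto
    also have "\<dots> = emeasure (sphere_measure :: ('a^'m) measure) (space sphere_measure)"
      by (simp add: M[symmetric])
    also have "\<dots> < \<infinity>" by (simp add: less_top[symmetric])
    finally show ?thesis .
  qed
  have B0: "0 \<le> B" using bnd[of 0] norm_ge_zero[of "F 0"] by linarith
  have int: "integrable ?P (\<lambda>p. g p *\<^sub>R F (T p))"
  proof (rule integrableI_bounded)
    show "(\<lambda>p. g p *\<^sub>R F (T p)) \<in> borel_measurable ?P" by measurable
    have "(\<integral>\<^sup>+p. ennreal (norm (g p *\<^sub>R F (T p))) \<partial>?P) \<le> (\<integral>\<^sup>+p. ennreal B * ennreal (g p) \<partial>?P)"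
    proof (intro nn_integral_mono)
      fix p
      have "g p * norm (F (T p)) \<le> g p * B" using g0 bnd by (intro mult_left_mono) auto
      then show "ennreal (norm (g p *\<^sub>R F (T p))) \<le> ennreal B * ennreal (g p)"
        using g0 B0 by (simp add: ennreal_mult[symmetric] mult.commute ennreal_leI)
    qed
    also have "\<dots> = ennreal B * (\<integral>\<^sup>+p. ennreal (g p) \<partial>?P)"
      by (rule nn_integral_cmult) auto
    also have "\<dots> < \<infinity>" using fin by (simp add: ennreal_mult_less_top)
    finally show "(\<integral>\<^sup>+p. ennreal (norm (g p *\<^sub>R F (T p))) \<partial>?P) < \<infinity>" .
  qed
  have "(\<integral>y. F y \<partial>sphere_measure) = (\<integral>p. F (T p) \<partial>density ?P (\<lambda>p. ennreal (g p)))"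
    by (subst M) (simp add: integral_distr)
  also have "\<dots> = (\<integral>p. g p *\<^sub>R F (T p) \<partial>?P)"
    using g0 by (subst integral_density) auto
  also have "\<dots> = (\<integral>w. (\<integral>\<theta>. g (w, \<theta>) *\<^sub>R F (T (w, \<theta>)) \<partial>sphere_measure) \<partial>muU k)"
    by (rule P.integral_fst'[OF int, symmetric])
  also have "\<dots> = (\<integral>w. \<gamma> w *\<^sub>R (\<integral>\<theta>. F (T (w, \<theta>)) \<partial>sphere_measure) \<partial>muU k)"
    by (simp add: g_def)
  finally have eq: "(\<integral>y. F y \<partial>sphere_measure) = (\<integral>w. \<gamma> w *\<^sub>R (\<integral>\<theta>. F (T (w, \<theta>)) \<partial>sphere_measure) \<partial>muU k)" .
  have intw: "integrable (muU k) (\<lambda>w. \<gamma> w *\<^sub>R (\<integral>\<theta>. F (T (w, \<theta>)) \<partial>sphere_measure))"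
    using P.integrable_fst'[OF int] by (simp add: g_def)
  have "ennreal (norm (\<integral>y. F y \<partial>sphere_measure)) \<le> (\<integral>\<^sup>+w. ennreal (norm (\<gamma> w *\<^sub>R (\<integral>\<theta>. F (T (w, \<theta>)) \<partial>sphere_measure))) \<partial>muU k)"
    unfolding eq by (rule integral_norm_bound_ennreal[OF intw])
  also have "\<dots> = (\<integral>\<^sup>+w. ennreal (\<gamma> w) * ennreal (norm (\<integral>\<theta>. F (T (w, \<theta>)) \<partial>sphere_measure)) \<partial>muU k)"
    by (intro nn_integral_cong) (simp add: \<gamma>_def ennreal_mult[symmetric])
  finally show ?thesis by (simp add: \<gamma>_def T_def)
qed

lemma deriv_g: "((\<lambda>s::real. s / sqrt (1 + s^2)) has_real_derivative 1 / ((1 + s^2) * sqrt (1 + s^2))) (at s)"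
proof -
  have p: "0 < 1 + s^2" by (simp add: add_pos_nonneg)
  have d1: "((\<lambda>s. 1 + s^2) has_real_derivative (2 * s)) (at s)" by (auto intro!: derivative_eq_intros)
  have d2: "((\<lambda>s. sqrt (1 + s^2)) has_real_derivative (inverse (sqrt (1+s^2)) / 2) * (2 * s)) (at s)"
    using DERIV_chain2[OF DERIV_real_sqrt[OF p] d1] by simp
  have d3: "((\<lambda>s. s / sqrt (1 + s^2)) has_real_derivative
     (1 * sqrt (1 + s^2) - s * ((inverse (sqrt (1+s^2)) / 2) * (2 * s))) / (sqrt (1 + s^2) * sqrt (1 + s^2))) (at s)"
    using p by (intro DERIV_divide[OF DERIV_ident d2]) simp
  have q: "sqrt (1 + s^2) * sqrt (1 + s^2) = 1 + s^2" using p by simp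
  have e: "(1 * sqrt (1 + s^2) - s * ((inverse (sqrt (1+s^2)) / 2) * (2 * s))) / (sqrt (1 + s^2) * sqrt (1 + s^2))
     = 1 / ((1 + s^2) * sqrt (1 + s^2))"
  proof -
    have sp: "0 < sqrt (1 + s^2)" using p by simp
    have "1 * sqrt (1 + s^2) - s * ((inverse (sqrt (1+s^2)) / 2) * (2 * s)) = (sqrt (1 + s^2) * sqrt (1 + s^2) - s^2) / sqrt (1 + s^2)"
      using sp by (simp add: field_simps power2_eq_square)
    also have "\<dots> = 1 / sqrt (1 + s^2)" unfolding q by simp
    finally show ?thesis unfolding q using sp p by (simp add: field_simps)
  qed
  show ?thesis using d3 unfolding e .
qed

lemma oneD:
  fixes \<kappa> :: "real \<Rightarrow> real" and d NN :: nat
  assumes \<kappa>[measurable]: "\<kappa> \<in> borel_measurable borel" and \<kappa>0: "\<And>r. 0 \<le> \<kappa> r"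
    and d: "1 \<le> d" and NN: "d + 2 \<le> NN"
  shows "(\<integral>\<^sup>+s. ennreal (indicator {0<..} s * s^(d-1) * sqrt (1 + s^2) powr - real NN) * ennreal (\<kappa> (s / sqrt (1 + s^2))) \<partial>lborel)
     \<le> (\<integral>\<^sup>+r. ennreal (indicator {0<..<1} r * r^(d-1)) * ennreal (\<kappa> r) \<partial>lborel)"
proof -
  define g where "g s = s / sqrt (1 + s^2)" for s :: real
  define g' where "g' s = 1 / ((1 + s^2) * sqrt (1 + s^2))" for s :: real
  define f where "f r = indicator {0<..} r * r^(d-1) * \<kappa> r" for r :: real
  have sq_pos: "0 < sqrt (1 + s^2)" for s :: real by (simp add: add_pos_nonneg)
  have deriv: "(g has_real_derivative g' s) (at s)" for s
    unfolding g_def g'_def by (rule deriv_g)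
  have ne: "1 + s^2 \<noteq> (0::real)" for s by (smt (verit) zero_le_power2)
  have contg': "continuous_on {a..b} g'" for a b
    unfolding g'_def using sq_pos ne by (intro continuous_intros) auto
  have g'0: "0 \<le> g' s" for s unfolding g'_def using sq_pos[of s] by (simp add: add_pos_nonneg)
  have glt1: "g s < 1" for s
  proof -
    have "s < sqrt (1 + s^2)" using real_sqrt_less_mono[of "s^2" "1 + s^2"] by (cases "s \<le> 0") (auto simp: add_pos_nonneg)
    then show ?thesis unfolding g_def using sq_pos[of s] by simp
  qed
  have g0: "g 0 = 0" by (simp add: g_def)
  have fm[measurable]: "f \<in> borel_measurable borel" unfolding f_def by measurable
  have f0: "0 \<le> f r" for r unfolding f_def using \<kappa>0[of r] by (auto simp: indicator_def)
  have pt: "ennreal (indicator {0<..} s * s^(d-1) * sqrt (1 + s^2) powr - real NN) * ennreal (\<kappa> (s / sqrt (1 + s^2)))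
     \<le> ennreal (f (g s) * g' s) * indicator {0..} s" for s
  proof (cases "0 < s")
    case False then show ?thesis by (simp add: indicator_def)
  next
    case s: True
    let ?q = "sqrt (1 + s^2)"
    have q1: "1 \<le> ?q" by simp
    have "s^(d-1) * ?q powr - real NN \<le> s^(d-1) * ?q powr - real (d + 2)"
      using NN q1 s by (intro mult_left_mono powr_mono) auto
    also have "?q powr - real (d + 2) = 1 / ?q^(d-1) * g' s"
    proof -
      have "?q powr - real (d + 2) = 1 / ?q ^ (d + 2)" by (simp only: powr_minus powr_realpow[OF sq_pos[of s]] inverse_eq_divide)
      also have "?q ^ (d + 2) = ?q^(d-1) * ((1 + s^2) * ?q)"
      proof -
        have "?q ^ (d + 2) = ?q^(d-1) * ?q^3" using d by (simp add: power_add[symmetric])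
        also have "?q^3 = (1 + s^2) * ?q" by (simp add: power3_eq_cube add_nonneg_nonneg)
        finally show ?thesis .
      qed
      finally show ?thesis unfolding g'_def by simp
    qed
    also have "s^(d-1) * (1 / ?q^(d-1) * g' s) = (g s)^(d-1) * g' s"
      unfolding g_def by (simp add: power_divide)
    finally have ineq: "s^(d-1) * ?q powr - real NN \<le> (g s)^(d-1) * g' s" .
    have gpos: "0 < g s" unfolding g_def using s sq_pos[of s] by simp
    have "s^(d-1) * ?q powr - real NN * \<kappa> (g s) \<le> (g s)^(d-1) * g' s * \<kappa> (g s)"
      using ineq \<kappa>0 by (intro mult_right_mono) auto
    note ineq2 = this
    have e1: "indicator {0<..} s * s^(d-1) * ?q powr - real NN = s^(d-1) * ?q powr - real NN" using s by simp
    have "ennreal (indicator {0<..} s * s^(d-1) * ?q powr - real NN) * ennreal (\<kappa> (s / ?q))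
        = ennreal (s^(d-1) * ?q powr - real NN * \<kappa> (g s))"
      unfolding e1 g_def using s \<kappa>0 by (subst ennreal_mult[symmetric]) auto
    also have "\<dots> \<le> ennreal ((g s)^(d-1) * g' s * \<kappa> (g s))" by (rule ennreal_leI) (rule ineq2)
    also have "\<dots> = ennreal (f (g s) * g' s) * indicator {0..} s" using s gpos by (simp add: f_def mult_ac)
    finally show ?thesis .
  qed
  have "(\<integral>\<^sup>+s. ennreal (indicator {0<..} s * s^(d-1) * sqrt (1 + s^2) powr - real NN) * ennreal (\<kappa> (s / sqrt (1 + s^2))) \<partial>lborel)
     \<le> (\<integral>\<^sup>+s. ennreal (f (g s) * g' s) * indicator {0..} s \<partial>lborel)"
    by (intro nn_integral_mono pt)
  also have "\<dots> = (\<integral>\<^sup>+s. (SUP n::nat. ennreal (f (g s) * g' s * indicator {0..real n} s)) \<partial>lborel)"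
  proof (intro nn_integral_cong)
    fix s :: real
    show "ennreal (f (g s) * g' s) * indicator {0..} s = (SUP n::nat. ennreal (f (g s) * g' s * indicator {0..real n} s))"
    proof (cases "0 \<le> s")
      case False then show ?thesis by (simp add: indicator_def)
    next
      case True
      show ?thesis
      proof (rule antisym)
        have "s \<le> real (nat \<lceil>s\<rceil>)" by linarith
        then have "ennreal (f (g s) * g' s) * indicator {0..} s = ennreal (f (g s) * g' s * indicator {0..real (nat \<lceil>s\<rceil>)} s)"
          using True by (simp add: indicator_def)
        also have "\<dots> \<le> (SUP n::nat. ennreal (f (g s) * g' s * indicator {0..real n} s))"
          by (rule SUP_upper) simp
        finally show "ennreal (f (g s) * g' s) * indicator {0..} s \<le> (SUP n::nat. ennreal (f (g s) * g' s * indicator {0..real n} s))" .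
        show "(SUP n::nat. ennreal (f (g s) * g' s * indicator {0..real n} s)) \<le> ennreal (f (g s) * g' s) * indicator {0..} s"
          using True f0 g'0 by (intro SUP_least) (auto simp: indicator_def)
      qed
    qed
  qed
  also have "\<dots> = (SUP n::nat. (\<integral>\<^sup>+s. ennreal (f (g s) * g' s * indicator {0..real n} s) \<partial>lborel))"
  proof (rule nn_integral_monotone_convergence_SUP)
    show "incseq (\<lambda>n s. ennreal (f (g s) * g' s * indicator {0..real n} s))"
      using f0 g'0 by (auto simp: incseq_def le_fun_def indicator_def intro!: ennreal_leI mult_nonneg_nonneg)
    have gm[measurable]: "g \<in> borel_measurable borel" unfolding g_def by measurable
    have g'm[measurable]: "g' \<in> borel_measurable borel" unfolding g'_def by measurable
    show "(\<lambda>s. ennreal (f (g s) * g' s * indicator {0..real n} s)) \<in> borel_measurable lborel" for n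
      by measurable
  qed
  also have "\<dots> \<le> (\<integral>\<^sup>+r. ennreal (indicator {0<..<1} r * r^(d-1)) * ennreal (\<kappa> r) \<partial>lborel)"
  proof (rule SUP_least)
    fix n :: nat
    have "(\<integral>\<^sup>+s. ennreal (f (g s) * g' s * indicator {0..real n} s) \<partial>lborel) = (\<integral>\<^sup>+r. ennreal (f r * indicator {g 0..g (real n)} r) \<partial>lborel)"
      by (rule nn_integral_substitution[symmetric, where g'=g']) (auto intro: deriv contg' g'0 simp: set_borel_measurable_def)
    also have "\<dots> \<le> (\<integral>\<^sup>+r. ennreal (indicator {0<..<1} r * r^(d-1)) * ennreal (\<kappa> r) \<partial>lborel)"
    proof (intro nn_integral_mono)
      fix r
      show "ennreal (f r * indicator {g 0..g (real n)} r) \<le> ennreal (indicator {0<..<1} r * r^(d-1)) * ennreal (\<kappa> r)"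
        using glt1[of "real n"] \<kappa>0[of r] unfolding g0 f_def
        by (auto simp: indicator_def ennreal_mult[symmetric])
    qed
    finally show "(\<integral>\<^sup>+s. ennreal (f (g s) * g' s * indicator {0..real n} s) \<partial>lborel) \<le> (\<integral>\<^sup>+r. ennreal (indicator {0<..<1} r * r^(d-1)) * ennreal (\<kappa> r) \<partial>lborel)" .
  qed
  finally show ?thesis .
qed

lemma ii_bound:
  fixes K :: "'a::euclidean_space^'m::finite \<Rightarrow> real" and k :: 'm
  assumes m2: "2 \<le> CARD('m)" and n2: "2 \<le> DIM('a)" and K[measurable]: "K \<in> borel_measurable borel"
    and K0: "\<And>u. 0 \<le> K u"
  shows "(\<integral>\<^sup>+w. ennreal (sqrt (1 + norm w ^ 2) powr - real DIM('a^'m)) * ennreal (K (w /\<^sub>R sqrt (1 + norm w ^ 2))) \<partial>muU k)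
    \<le> (\<integral>\<^sup>+u. indicator (ball 0 1) u * ennreal (K u) \<partial>muU k)"
proof -
  define d where "d = DIM('a) * (CARD('m) - 1)"
  define NN where "NN = DIM('a^'m)"
  interpret U: scaling_measure "muU k :: ('a^'m) measure" d
    unfolding d_def by (rule scaling_muU[OF m2])
  interpret S: finite_measure U.sph by (rule U.finite_sph)
  interpret P: pair_sigma_finite "lborel :: real measure" U.sph
    by (intro pair_sigma_finite.intro lborel.sigma_finite_measure_axioms S.sigma_finite_measure_axioms)
  have d1: "1 \<le> d" using U.d_pos by simp
  have NN: "d + 2 \<le> NN"
  proof -
    have c: "CARD('m) - 1 + 1 = CARD('m)" using m2 by simp
    have "d + DIM('a) = NN" unfolding d_def NN_def
      by (metis DIM_cart add_mult_distrib2 c mult.commute mult_1_right)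
    then show ?thesis using n2 by linarith
  qed
  define H where "H w = ennreal (sqrt (1 + norm w ^ 2) powr - real NN) * ennreal (K (w /\<^sub>R sqrt (1 + norm w ^ 2)))" for w :: "'a^'m"
  have Hm[measurable]: "H \<in> borel_measurable borel" unfolding H_def by measurable
  have ballm[measurable]: "ball (0::'a^'m) 1 \<in> sets borel" by simp
  define Q where "Q s \<theta> = ennreal (indicator {0<..} s * s^(d-1) * sqrt (1 + s^2) powr - real NN) * ennreal (K ((s / sqrt (1 + s^2)) *\<^sub>R \<theta>))"
    for s :: real and \<theta> :: "'a^'m"
  define R where "R s \<theta> = ennreal (indicator {0<..<1} s * s^(d-1)) * ennreal (K (s *\<^sub>R \<theta>))"
    for s :: real and \<theta> :: "'a^'m"
  have Qm[measurable]: "(\<lambda>(s, \<theta>). Q s \<theta>) \<in> borel_measurable (lborel \<Otimes>\<^sub>M U.sph)" unfolding Q_def by measurable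
  have Rm[measurable]: "(\<lambda>(s, \<theta>). R s \<theta>) \<in> borel_measurable (lborel \<Otimes>\<^sub>M U.sph)" unfolding R_def by measurable
  have "(\<integral>\<^sup>+w. H w \<partial>muU k) = (\<integral>\<^sup>+s. ennreal (indicator {0<..} s * s^(d-1)) * (\<integral>\<^sup>+\<theta>. H (s *\<^sub>R \<theta>) \<partial>U.sph) \<partial>lborel)"
    by (rule U.polar_nn[OF Hm])
  also have "\<dots> = (\<integral>\<^sup>+s. (\<integral>\<^sup>+\<theta>. Q s \<theta> \<partial>U.sph) \<partial>lborel)"
  proof (intro nn_integral_cong)
    fix s :: real
    have "ennreal (indicator {0<..} s * s^(d-1)) * (\<integral>\<^sup>+\<theta>. H (s *\<^sub>R \<theta>) \<partial>U.sph) =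
       (\<integral>\<^sup>+\<theta>. ennreal (indicator {0<..} s * s^(d-1)) * H (s *\<^sub>R \<theta>) \<partial>U.sph)"
      by (rule nn_integral_cmult[symmetric]) measurable
    also have "\<dots> = (\<integral>\<^sup>+\<theta>. Q s \<theta> \<partial>U.sph)"
    proof (rule nn_integral_cong_AE)
      show "AE \<theta> in U.sph. ennreal (indicator {0<..} s * s^(d-1)) * H (s *\<^sub>R \<theta>) = Q s \<theta>"
        using U.AE_sph_norm
      proof eventually_elim
        fix \<theta> :: "'a^'m" assume n1: "norm \<theta> = 1"
        show "ennreal (indicator {0<..} s * s^(d-1)) * H (s *\<^sub>R \<theta>) = Q s \<theta>"
        proof (cases "0 < s")
          case False then show ?thesis by (simp add: Q_def)
        next
          case True
          have "norm (s *\<^sub>R \<theta>) = s" using True n1 by simp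
          moreover have "(inverse (sqrt (1 + s\<^sup>2)) * s) = s / sqrt (1 + s\<^sup>2)" by (simp add: divide_inverse mult.commute)
          ultimately show ?thesis using True unfolding H_def Q_def
            by (simp add: ennreal_mult mult.assoc)
        qed
      qed
    qed
    finally show "ennreal (indicator {0<..} s * s^(d-1)) * (\<integral>\<^sup>+\<theta>. H (s *\<^sub>R \<theta>) \<partial>U.sph) = (\<integral>\<^sup>+\<theta>. Q s \<theta> \<partial>U.sph)" .
  qed
  also have "\<dots> = (\<integral>\<^sup>+\<theta>. (\<integral>\<^sup>+s. Q s \<theta> \<partial>lborel) \<partial>U.sph)"
    by (rule P.Fubini'[where f=Q, symmetric]) (rule Qm)
  also have "\<dots> \<le> (\<integral>\<^sup>+\<theta>. (\<integral>\<^sup>+s. R s \<theta> \<partial>lborel) \<partial>U.sph)"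
  proof (rule nn_integral_mono)
    fix \<theta> :: "'a^'m"
    show "(\<integral>\<^sup>+s. Q s \<theta> \<partial>lborel) \<le> (\<integral>\<^sup>+s. R s \<theta> \<partial>lborel)"
    proof -
      have km: "(\<lambda>r. K (r *\<^sub>R \<theta>)) \<in> borel_measurable borel"
        by (rule measurable_compose[OF _ K]) (intro borel_measurable_continuous_onI continuous_intros)
      show ?thesis unfolding Q_def R_def using oneD[OF km, of d NN] K0 d1 NN by simp
    qed
  qed
  also have "\<dots> = (\<integral>\<^sup>+s. (\<integral>\<^sup>+\<theta>. R s \<theta> \<partial>U.sph) \<partial>lborel)"
    by (rule P.Fubini'[where f=R]) (rule Rm)
  also have "\<dots> = (\<integral>\<^sup>+s. ennreal (indicator {0<..} s * s^(d-1)) * (\<integral>\<^sup>+\<theta>. indicator (ball 0 1) (s *\<^sub>R \<theta>) * ennreal (K (s *\<^sub>R \<theta>)) \<partial>U.sph) \<partial>lborel)"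
  proof (intro nn_integral_cong)
    fix s :: real
    have sc: "(\<lambda>x::'a^'m. s *\<^sub>R x) \<in> borel_measurable borel"
      by (intro borel_measurable_continuous_onI continuous_intros)
    have fm: "(\<lambda>u::'a^'m. indicator (ball 0 1) u * ennreal (K u)) \<in> borel_measurable borel"
      by (intro borel_measurable_times_ennreal borel_measurable_indicator measurable_compose[OF K] borel_open open_ball) simp
    have [measurable]: "(\<lambda>\<theta>. indicator (ball 0 1) (s *\<^sub>R \<theta>) * ennreal (K (s *\<^sub>R \<theta>))) \<in> borel_measurable U.sph"
      using measurable_compose[OF sc fm] by (simp add: measurable_cong_sets[OF U.sets_sph refl])
    have "ennreal (indicator {0<..} s * s^(d-1)) * (\<integral>\<^sup>+\<theta>. indicator (ball 0 1) (s *\<^sub>R \<theta>) * ennreal (K (s *\<^sub>R \<theta>)) \<partial>U.sph) =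
       (\<integral>\<^sup>+\<theta>. ennreal (indicator {0<..} s * s^(d-1)) * (indicator (ball 0 1) (s *\<^sub>R \<theta>) * ennreal (K (s *\<^sub>R \<theta>))) \<partial>U.sph)"
      by (rule nn_integral_cmult[symmetric]) measurable
    also have "\<dots> = (\<integral>\<^sup>+\<theta>. R s \<theta> \<partial>U.sph)"
    proof (rule nn_integral_cong_AE)
      show "AE \<theta> in U.sph. ennreal (indicator {0<..} s * s^(d-1)) * (indicator (ball 0 1) (s *\<^sub>R \<theta>) * ennreal (K (s *\<^sub>R \<theta>))) = R s \<theta>"
        using U.AE_sph_norm
      proof eventually_elim
        fix \<theta> :: "'a^'m" assume n1: "norm \<theta> = 1"
        show "ennreal (indicator {0<..} s * s^(d-1)) * (indicator (ball 0 1) (s *\<^sub>R \<theta>) * ennreal (K (s *\<^sub>R \<theta>))) = R s \<theta>"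
        proof (cases "0 < s")
          case False then show ?thesis by (simp add: R_def)
        next
          case True
          have "norm (s *\<^sub>R \<theta>) = s" using True n1 by simp
          then show ?thesis using True unfolding R_def
            by (simp add: indicator_def mem_ball_0 mult.assoc)
        qed
      qed
    qed
    finally show "(\<integral>\<^sup>+\<theta>. R s \<theta> \<partial>U.sph) = ennreal (indicator {0<..} s * s^(d-1)) * (\<integral>\<^sup>+\<theta>. indicator (ball 0 1) (s *\<^sub>R \<theta>) * ennreal (K (s *\<^sub>R \<theta>)) \<partial>U.sph)" by simp
  qed
  also have "\<dots> = (\<integral>\<^sup>+u. indicator (ball 0 1) u * ennreal (K u) \<partial>muU k)"
    by (rule U.polar_nn[symmetric]) measurable
  finally show ?thesis unfolding H_def NN_def .
qed

lemma schwartz_cont: assumes "schwartz f" shows "continuous_on UNIV f"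
proof -
  have "\<forall>x. f differentiable (at x)"
    using assms unfolding schwartz_def by (metis empty_subsetI iter_partial.simps(1) list.set(1))
  then show ?thesis
    by (intro continuous_at_imp_continuous_on) (auto intro: differentiable_imp_continuous_within)
qed

lemma schwartz_meas: "schwartz f \<Longrightarrow> f \<in> borel_measurable borel"
  by (rule borel_measurable_continuous_onI) (rule schwartz_cont)

lemma schwartz_bdd: assumes "schwartz f" shows "\<exists>B. \<forall>x. norm (f x) \<le> B"
proof -
  have "bounded (range (\<lambda>x. ((1 + norm x) ^ 0) *\<^sub>R iter_partial [] f x))"
    using assms unfolding schwartz_def by (metis empty_subsetI list.set(1))
  then have "bounded (range f)" by simp
  then show ?thesis by (auto simp: bounded_iff)
qed

lemma ball_avg_bound:
  fixes f :: "'a::euclidean_space \<Rightarrow> complex"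
  assumes fm[measurable]: "f \<in> borel_measurable borel" and t: "0 < t"
  shows "(\<integral>\<^sup>+v. indicator (ball 0 1) v * ennreal (norm (f (x - t *\<^sub>R v))) \<partial>lborel)
     \<le> ennreal (unit_ball_vol (real DIM('a))) * HL_max f x"
proof -
  define L where "L = (\<integral>\<^sup>+v. indicator (ball 0 1) v * ennreal (norm (f (x - t *\<^sub>R v))) \<partial>lborel)"
  define A where "A = (\<integral>\<^sup>+y\<in>ball x t. ennreal (norm (f y)) \<partial>lborel)"
  define b where "b = ennreal (unit_ball_vol (real DIM('a)))"
  have aff: "(lborel :: 'a measure) = density (distr lborel borel (\<lambda>v. x + (- t) *\<^sub>R v)) (\<lambda>_. \<bar>- t\<bar> ^ DIM('a))"
    by (rule lborel_affine) (use t in simp)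
  have [measurable]: "ball x t \<in> sets borel" by simp
  have pre: "x + (- t) *\<^sub>R v \<in> ball x t \<longleftrightarrow> v \<in> ball 0 1" for v
    using t by (simp add: dist_norm mem_ball_0)
  have pre2: "x - t *\<^sub>R v \<in> ball x t \<longleftrightarrow> v \<in> ball 0 1" for v
    using pre[of v] by simp
  have "A = (\<integral>\<^sup>+y. ennreal (norm (f y)) * indicator (ball x t) y \<partial>lborel)" by (simp add: A_def)
  also have "\<dots> = ennreal (t ^ DIM('a)) * (\<integral>\<^sup>+v. ennreal (norm (f (x + (- t) *\<^sub>R v))) * indicator (ball x t) (x + (- t) *\<^sub>R v) \<partial>lborel)"
    by (subst aff) (simp add: nn_integral_density nn_integral_distr nn_integral_cmult t less_imp_le)
  also have "(\<integral>\<^sup>+v. ennreal (norm (f (x + (- t) *\<^sub>R v))) * indicator (ball x t) (x + (- t) *\<^sub>R v) \<partial>lborel) = L"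
  proof -
    have lt: "\<bar>t\<bar> * norm v < t \<longleftrightarrow> norm v < 1" for v :: 'a
      using t by (simp add: abs_of_pos)
    show ?thesis unfolding L_def by (intro nn_integral_cong) (simp add: indicator_def dist_norm lt mem_ball_0)
  qed
  finally have AL: "A = ennreal (t ^ DIM('a)) * L" .
  have Bt: "emeasure lborel (ball x t) = ennreal (t ^ DIM('a)) * b"
    unfolding b_def using t by (simp add: emeasure_ball ennreal_mult[symmetric] mult.commute)
  have ubv: "0 < unit_ball_vol (real DIM('a))" by (rule unit_ball_vol_pos) simp
  have b0: "b \<noteq> 0" "b \<noteq> \<infinity>" unfolding b_def ennreal_eq_0_iff using ubv by (linarith, simp)
  have t0: "ennreal (t ^ DIM('a)) \<noteq> 0" "ennreal (t ^ DIM('a)) \<noteq> \<infinity>" using t by auto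
  have "A / emeasure lborel (ball x t) \<le> HL_max f x"
    unfolding HL_max_def A_def using t by (intro SUP_upper) auto
  then have "A / emeasure lborel (ball x t) * emeasure lborel (ball x t) \<le> HL_max f x * emeasure lborel (ball x t)"
    by (rule mult_right_mono) simp
  moreover have "A / emeasure lborel (ball x t) * emeasure lborel (ball x t) = A"
  proof -
    have bb: "ennreal (t ^ DIM('a)) * b \<noteq> 0" "ennreal (t ^ DIM('a)) * b < \<infinity>"
      using b0 t0 by (auto simp: ennreal_mult_eq_top_iff ennreal_mult_less_top less_top)
    show ?thesis unfolding Bt ennreal_divide_times using bb by simp
  qed
  ultimately have "ennreal (t ^ DIM('a)) * L \<le> ennreal (t ^ DIM('a)) * (b * HL_max f x)"
    unfolding AL Bt by (simp add: mult_ac)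
  then have "L \<le> b * HL_max f x" using t0 by (simp add: ennreal_mult_le_mult_iff)
  then show ?thesis unfolding L_def b_def .
qed

lemma prod_ball_bound:
  fixes f :: "'m::finite \<Rightarrow> 'a::euclidean_space \<Rightarrow> complex" and k :: 'm
  assumes fm[measurable]: "\<And>j. f j \<in> borel_measurable borel"
  shows "(\<integral>\<^sup>+u. indicator (ball 0 1) u * ennreal (norm (\<Prod>j\<in>UNIV-{k}. f j (x - t *\<^sub>R (u $ j)))) \<partial>muU k)
    \<le> (\<Prod>j\<in>UNIV-{k}. \<integral>\<^sup>+v. indicator (ball 0 1) v * ennreal (norm (f j (x - t *\<^sub>R v))) \<partial>lborel)"
proof -
  interpret product_sigma_finite "\<lambda>_. lborel :: 'a measure" by standard
  define G where "G j v = indicator (ball 0 1) v * ennreal (norm (f j (x - t *\<^sub>R v)))" for j v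
  have [measurable]: "ball (0::'a^'m) 1 \<in> sets borel" "ball (0::'a) 1 \<in> sets borel" by simp_all
  have Gm: "G j \<in> borel_measurable borel" for j unfolding G_def by measurable
  have Pm: "(\<lambda>u::'a^'m. indicator (ball 0 1) u * ennreal (norm (\<Prod>j\<in>UNIV-{k}. f j (x - t *\<^sub>R (u $ j))))) \<in> borel_measurable borel"
    by measurable
  have "(\<integral>\<^sup>+u. indicator (ball 0 1) u * ennreal (norm (\<Prod>j\<in>UNIV-{k}. f j (x - t *\<^sub>R (u $ j)))) \<partial>muU k)
     = (\<integral>\<^sup>+g. indicator (ball 0 1) (emb k g) * ennreal (norm (\<Prod>j\<in>UNIV-{k}. f j (x - t *\<^sub>R (emb k g $ j)))) \<partial>PiM (UNIV - {k}) (\<lambda>_. lborel))"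
    unfolding muU_def using Pm by (subst nn_integral_distr) auto
  also have "\<dots> \<le> (\<integral>\<^sup>+g. (\<Prod>j\<in>UNIV-{k}. G j (g j)) \<partial>PiM (UNIV - {k}) (\<lambda>_. lborel))"
  proof (rule nn_integral_mono)
    fix g :: "'m \<Rightarrow> 'a"
    have e: "emb k g $ j = g j" if "j \<in> UNIV - {k}" for j using that by (simp add: emb_def)
    have n: "ennreal (norm (\<Prod>j\<in>UNIV-{k}. f j (x - t *\<^sub>R (emb k g $ j)))) = (\<Prod>j\<in>UNIV-{k}. ennreal (norm (f j (x - t *\<^sub>R g j))))"
      by (simp add: e prod_norm[symmetric] prod_ennreal)
    show "indicator (ball 0 1) (emb k g) * ennreal (norm (\<Prod>j\<in>UNIV-{k}. f j (x - t *\<^sub>R (emb k g $ j)))) \<le> (\<Prod>j\<in>UNIV-{k}. G j (g j))"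
    proof (cases "emb k g \<in> ball 0 1")
      case False then show ?thesis by simp
    next
      case True
      have "g j \<in> ball 0 1" if "j \<in> UNIV - {k}" for j
      proof -
        have "norm (g j) = norm (emb k g $ j)" using e[OF that] by simp
        also have "\<dots> \<le> norm (emb k g)" by (rule Finite_Cartesian_Product.norm_nth_le)
        finally show ?thesis using True by simp
      qed
      then have "(\<Prod>j\<in>UNIV-{k}. G j (g j)) = (\<Prod>j\<in>UNIV-{k}. ennreal (norm (f j (x - t *\<^sub>R g j))))"
        unfolding G_def by (intro prod.cong) auto
      then show ?thesis using True n by simp
    qed
  qed
  also have "\<dots> = (\<Prod>j\<in>UNIV-{k}. \<integral>\<^sup>+v. G j v \<partial>lborel)"
    by (rule product_nn_integral_prod) (auto intro: Gm)
  finally show ?thesis unfolding G_def .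
qed

lemma vec_idx:
  fixes w :: "'a::euclidean_space^'m::finite"
  assumes "w $ k = 0"
  shows "((w + insk k \<theta>) /\<^sub>R r) $ j = (if j = k then \<theta> /\<^sub>R r else (w /\<^sub>R r) $ j)"
  using assms by (simp add: insk_def)

lemma fixed_t_bound:
  fixes f :: "'m::finite \<Rightarrow> 'a::euclidean_space \<Rightarrow> complex" and k :: 'm
  assumes m2: "2 \<le> CARD('m)" and n2: "2 \<le> DIM('a)" and fm[measurable]: "\<And>j. f j \<in> borel_measurable borel"
    and bdd: "\<And>j y. norm (f j y) \<le> B j" and t: "0 < t"
  shows "ennreal (norm (\<integral>y. (\<Prod>j\<in>UNIV. f j (x - t *\<^sub>R (y $ j))) \<partial>(sphere_measure :: ('a^'m) measure)))
    \<le> ennreal (unit_ball_vol (real DIM('a)) ^ (CARD('m) - 1)) * (\<Prod>j\<in>UNIV - {k}. HL_max (f j) x) * sph_max (f k) x"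
proof -
  define \<rho> where "\<rho> w = sqrt (1 + norm w ^ 2)" for w :: "'a^'m"
  define F where "F y = (\<Prod>j\<in>UNIV. f j (x - t *\<^sub>R (y $ j)))" for y :: "'a^'m"
  define P where "P u = (\<Prod>j\<in>UNIV - {k}. f j (x - t *\<^sub>R (u $ j)))" for u :: "'a^'m"
  define S where "S = sph_max (f k) x"
  define NN where "NN = DIM('a^'m)"
  define c where "c = unit_ball_vol (real DIM('a))"
  have \<rho>_pos: "0 < \<rho> w" for w by (simp add: \<rho>_def add_pos_nonneg)
  have Fm[measurable]: "F \<in> borel_measurable borel" unfolding F_def by measurable
  have Pm[measurable]: "P \<in> borel_measurable borel" unfolding P_def by measurable
  have Fb: "norm (F y) \<le> (\<Prod>j\<in>UNIV. B j)" for y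
    unfolding F_def prod_norm[symmetric] by (intro prod_mono) (auto intro: bdd)
  have "ennreal (norm (\<integral>y. F y \<partial>(sphere_measure :: ('a^'m) measure))) \<le>
    (\<integral>\<^sup>+w. ennreal (\<rho> w powr - real NN) * ennreal (norm (\<integral>\<theta>. F ((w + insk k \<theta>) /\<^sub>R \<rho> w) \<partial>sphere_measure)) \<partial>muU k)"
    unfolding \<rho>_def NN_def by (rule star_norm_bound[OF m2 Fm Fb])
  also have "\<dots> \<le> (\<integral>\<^sup>+w. S * (ennreal (\<rho> w powr - real NN) * ennreal (norm (P (w /\<^sub>R \<rho> w)))) \<partial>muU k)"
  proof (rule nn_integral_mono_AE)
    show "AE w in muU k. ennreal (\<rho> w powr - real NN) * ennreal (norm (\<integral>\<theta>. F ((w + insk k \<theta>) /\<^sub>R \<rho> w) \<partial>sphere_measure))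
        \<le> S * (ennreal (\<rho> w powr - real NN) * ennreal (norm (P (w /\<^sub>R \<rho> w))))"
      using AE_muU
    proof eventually_elim
      fix w :: "'a^'m" assume wk: "w $ k = 0"
      have FF: "F ((w + insk k \<theta>) /\<^sub>R \<rho> w) = P (w /\<^sub>R \<rho> w) * f k (x - (t / \<rho> w) *\<^sub>R \<theta>)" for \<theta>
      proof -
        have "F ((w + insk k \<theta>) /\<^sub>R \<rho> w) = f k (x - t *\<^sub>R (\<theta> /\<^sub>R \<rho> w)) * P (w /\<^sub>R \<rho> w)"
          unfolding F_def P_def
          by (subst prod.remove[of _ k]) (auto simp: insk_def wk intro!: prod.cong)
        then show ?thesis by (simp add: mult.commute divide_inverse_commute)
      qed
      have "ennreal (norm (\<integral>\<theta>. f k (x - (t / \<rho> w) *\<^sub>R \<theta>) \<partial>sphere_measure)) \<le> S"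
        unfolding S_def sph_max_def using t \<rho>_pos[of w]
        by (intro SUP_upper) auto
      then have h: "ennreal (norm (\<integral>\<theta>. F ((w + insk k \<theta>) /\<^sub>R \<rho> w) \<partial>sphere_measure)) \<le> ennreal (norm (P (w /\<^sub>R \<rho> w))) * S"
        unfolding FF by (simp add: norm_mult ennreal_mult mult_left_mono)
      show "ennreal (\<rho> w powr - real NN) * ennreal (norm (\<integral>\<theta>. F ((w + insk k \<theta>) /\<^sub>R \<rho> w) \<partial>sphere_measure))
        \<le> S * (ennreal (\<rho> w powr - real NN) * ennreal (norm (P (w /\<^sub>R \<rho> w))))"
      proof -
        have "ennreal (\<rho> w powr - real NN) * ennreal (norm (\<integral>\<theta>. F ((w + insk k \<theta>) /\<^sub>R \<rho> w) \<partial>sphere_measure))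
           \<le> ennreal (\<rho> w powr - real NN) * (ennreal (norm (P (w /\<^sub>R \<rho> w))) * S)"
          by (rule mult_left_mono[OF h]) simp
        then show ?thesis by (simp add: mult_ac)
      qed
    qed
  qed
  also have "\<dots> = S * (\<integral>\<^sup>+w. ennreal (\<rho> w powr - real NN) * ennreal (norm (P (w /\<^sub>R \<rho> w))) \<partial>muU k)"
    unfolding \<rho>_def by (rule nn_integral_cmult) measurable
  also have "\<dots> \<le> S * (\<integral>\<^sup>+u. indicator (ball 0 1) u * ennreal (norm (P u)) \<partial>muU k)"
    unfolding \<rho>_def NN_def
    by (intro mult_left_mono ii_bound[OF m2 n2]) (auto intro: measurable_compose[OF Pm])
  also have "\<dots> \<le> S * (\<Prod>j\<in>UNIV-{k}. \<integral>\<^sup>+v. indicator (ball 0 1) v * ennreal (norm (f j (x - t *\<^sub>R v))) \<partial>lborel)"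
    unfolding P_def by (intro mult_left_mono prod_ball_bound fm) simp
  also have "\<dots> \<le> S * (\<Prod>j\<in>UNIV-{k}. ennreal c * HL_max (f j) x)"
    unfolding c_def by (intro mult_left_mono prod_mono_ennreal ball_avg_bound fm t) auto
  also have "\<dots> = ennreal (c ^ (CARD('m) - 1)) * (\<Prod>j\<in>UNIV - {k}. HL_max (f j) x) * S"
    by (simp add: prod.distrib ennreal_power card_Diff_singleton mult_ac c_def)
  finally show ?thesis unfolding F_def S_def c_def .
qed

theorem mainTheorem6:
  assumes "CARD('n::finite) \<ge> 2" and "CARD('m::finite) \<ge> 2"
  shows "\<exists>C::real. C > 0 \<and>
    (\<forall>(f :: 'm \<Rightarrow> real^'n \<Rightarrow> complex) k x. (\<forall>j. schwartz (f j)) \<longrightarrow>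
       multi_sph_max f x \<le> ennreal C * (\<Prod>j\<in>UNIV - {k}. HL_max (f j) x) * sph_max (f k) x)"
proof (intro exI conjI allI impI)
  define C where "C = unit_ball_vol (real DIM(real^'n)) ^ (CARD('m) - 1)"
  have "0 < unit_ball_vol (real DIM(real^'n))" by (rule unit_ball_vol_pos) simp
  then show "0 < C" unfolding C_def by simp
  fix f :: "'m \<Rightarrow> real^'n \<Rightarrow> complex" and k x
  assume sch: "\<forall>j. schwartz (f j)"
  have fm: "\<And>j. f j \<in> borel_measurable borel" using sch schwartz_meas by blast
  define B where "B j = (SOME B. \<forall>y. norm (f j y) \<le> B)" for j
  have bdd: "norm (f j y) \<le> B j" for j y
    unfolding B_def using someI_ex[OF schwartz_bdd[OF sch[rule_format, of j]]] by blast
  have n2: "2 \<le> DIM(real^'n)" using assms(1) by simp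
  show "multi_sph_max f x \<le> ennreal C * (\<Prod>j\<in>UNIV - {k}. HL_max (f j) x) * sph_max (f k) x"
    unfolding multi_sph_max_def C_def
    by (intro SUP_least fixed_t_bound[OF assms(2) n2 fm bdd]) auto
qed

end
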